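(* Let $X$ and $Y$ be Banach spaces with normalized Schauder bases $(x_i)_i$ and $(y_i)_i$ respectively, where $(x_i)_i$ is unconditional and $(y_i^* )_i$ is submultiplicative. Let $M=\{m_1<m_2<\cdots\}$ and $N=\{n_1<n_2<\cdots\}$ be subsets of $\mathbb{N}$ with $M\cup N=\mathbb{N}$. Define a norm on $c_{00}(\mathbb{N})$ by $\|\sum_i a_ie_i\|=\max\{\|\sum_i a_{m_i}x_i\|,\|\sum_i a_{n_i}y_i\|\}$ and let $W$ be the completion. Then the sequence $(e_i^* )_i$ in $W^*$ is submultiplicative.
   Context: $(e_i)$ is the unit vector basis of $c_{00}(\mathbb{N})$; $(y_i^* )$ and $(e_i^* )$ are biorthogonal functionals. A sequence $(z_i)_i$ is submultiplicative if there is $C>0$ with $\|\sum_{i=1}^na_ib_iz_i\|\le C\|\sum_{i=1}^na_iz_i\|\|\sum_{i=1}^nb_iz_i\|$ for all $n$ and all scalars $(a_i)_{i=1}^n,(b_i)_{i=1}^n$. *)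

theory Defs
  imports "HOL-Analysis.Analysis"
begin

definition schauder_basis :: "(nat \<Rightarrow> 'a::banach) \<Rightarrow> bool" where
  "schauder_basis x \<longleftrightarrow> (\<forall>v. \<exists>!c. (\<lambda>i. c i *\<^sub>R x i) sums v)"

definition normalized_schauder_basis :: "(nat \<Rightarrow> 'a::banach) \<Rightarrow> bool" where
  "normalized_schauder_basis x \<longleftrightarrow> schauder_basis x \<and> (\<forall>i. norm (x i) = 1)"

definition unconditional_basis :: "(nat \<Rightarrow> 'a::banach) \<Rightarrow> bool" where
  "unconditional_basis x \<longleftrightarrow> schauder_basis x \<and>
     (\<forall>v c. (\<lambda>i. c i *\<^sub>R x i) sums v \<longrightarrow> ((\<lambda>i. c i *\<^sub>R x i) has_sum v) UNIV)"

definition coord :: "(nat \<Rightarrow> 'a::banach) \<Rightarrow> nat \<Rightarrow> 'a \<Rightarrow> real" where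
  "coord x i v = (THE c. (\<lambda>j. c j *\<^sub>R x j) sums v) i"

text \<open>Submultiplicativity of a sequence (z_i), given the function
  K a \<mapsto> norm (\<Sum>i<K. a i z_i).\<close>
definition submultiplicative :: "(nat \<Rightarrow> (nat \<Rightarrow> real) \<Rightarrow> real) \<Rightarrow> bool" where
  "submultiplicative nrm \<longleftrightarrow> (\<exists>C>0. \<forall>K a b.
      nrm K (\<lambda>i. a i * b i) \<le> C * nrm K a * nrm K b)"

text \<open>Norm in Y^* of \<Sum>i<K. a i y_i^*.\<close>
definition dual_comb_norm :: "(nat \<Rightarrow> 'a::banach) \<Rightarrow> nat \<Rightarrow> (nat \<Rightarrow> real) \<Rightarrow> real" where
  "dual_comb_norm y K a = onorm (\<lambda>v. \<Sum>i<K. a i * coord y i v)"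

definition c00 :: "(nat \<Rightarrow> real) \<Rightarrow> bool" where
  "c00 c \<longleftrightarrow> finite {i. c i \<noteq> 0}"

definition W_norm :: "(nat \<Rightarrow> 'a::banach) \<Rightarrow> (nat \<Rightarrow> 'b::banach) \<Rightarrow> (nat \<Rightarrow> nat) \<Rightarrow> (nat \<Rightarrow> nat)
    \<Rightarrow> (nat \<Rightarrow> real) \<Rightarrow> real" where
  "W_norm x y m n c = max (norm (\<Sum>i\<in>{i. c (m i) \<noteq> 0}. c (m i) *\<^sub>R x i))
                          (norm (\<Sum>i\<in>{i. c (n i) \<noteq> 0}. c (n i) *\<^sub>R y i))"

text \<open>Norm in W^* of \<Sum>i<K. a i e_i^*, computed on the dense subspace c_00 of W.\<close>
definition W_dual_comb_norm :: "(nat \<Rightarrow> 'a::banach) \<Rightarrow> (nat \<Rightarrow> 'b::banach) \<Rightarrow> (nat \<Rightarrow> nat)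
    \<Rightarrow> (nat \<Rightarrow> nat) \<Rightarrow> nat \<Rightarrow> (nat \<Rightarrow> real) \<Rightarrow> real" where
  "W_dual_comb_norm x y m n K a =
     Sup {\<bar>\<Sum>i<K. a i * c i\<bar> | c. c00 c \<and> W_norm x y m n c \<le> 1}"

end

theory Submission
  imports Defs
begin

section \<open>Coordinates\<close>

lemma coord_sums:
  assumes "schauder_basis z"
  shows "(\<lambda>i. coord z i v *\<^sub>R z i) sums v"
proof -
  from assms have "\<exists>!c. (\<lambda>i. c i *\<^sub>R z i) sums v" by (simp add: schauder_basis_def)
  then have "(\<lambda>i. (THE c. (\<lambda>i. c i *\<^sub>R z i) sums v) i *\<^sub>R z i) sums v"
    by (rule theI')
  then show ?thesis by (simp add: coord_def)
qed

lemma coord_unique: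
  assumes "schauder_basis z" "(\<lambda>i. c i *\<^sub>R z i) sums v"
  shows "coord z i v = c i"
proof -
  from assms have "\<exists>!c. (\<lambda>i. c i *\<^sub>R z i) sums v" by (simp add: schauder_basis_def)
  then have "(THE c. (\<lambda>i. c i *\<^sub>R z i) sums v) = c"
    using assms(2) the1_equality[of "\<lambda>c. (\<lambda>i. c i *\<^sub>R z i) sums v" c] by blast
  then show ?thesis by (simp add: coord_def)
qed

lemma coord_add:
  assumes "schauder_basis z"
  shows "coord z i (u + v) = coord z i u + coord z i v"
proof -
  have "(\<lambda>i. (coord z i u + coord z i v) *\<^sub>R z i) sums (u + v)"
    using sums_add[OF coord_sums[OF assms, of u] coord_sums[OF assms, of v]]
    by (simp add: scaleR_add_left)
  from coord_unique[OF assms this] show ?thesis by simp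
qed

lemma coord_scale:
  assumes "schauder_basis z"
  shows "coord z i (t *\<^sub>R v) = t * coord z i v"
proof -
  have "(\<lambda>i. (t * coord z i v) *\<^sub>R z i) sums (t *\<^sub>R v)"
    using sums_scaleR_right[OF coord_sums[OF assms, of v], of t]
    by simp
  from coord_unique[OF assms this] show ?thesis by simp
qed

lemma coord_finite:
  assumes "schauder_basis z" "finite F"
  shows "coord z i (\<Sum>j\<in>F. d j *\<^sub>R z j) = (if i \<in> F then d i else 0)"
proof -
  let ?c = "\<lambda>j. if j \<in> F then d j else 0"
  have "(\<lambda>j. ?c j *\<^sub>R z j) sums (\<Sum>j\<in>F. ?c j *\<^sub>R z j)"
    by (rule sums_finite) (use assms in auto)
  also have "(\<Sum>j\<in>F. ?c j *\<^sub>R z j) = (\<Sum>j\<in>F. d j *\<^sub>R z j)"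
    by (rule sum.cong) auto
  finally show ?thesis using coord_unique[OF assms(1)] by simp
qed

section \<open>Multipliers\<close>

lemma mult_bound_pos_aux:
  fixes v :: "nat \<Rightarrow> 'a::real_normed_vector"
  assumes "finite G"
  shows "(\<forall>G'\<subseteq>G. norm (\<Sum>j\<in>G'. v j) \<le> S) \<longrightarrow> (\<forall>\<beta> B. 0 \<le> B \<and> (\<forall>j\<in>G. 0 \<le> \<beta> j \<and> \<beta> j \<le> B) \<longrightarrow> norm (\<Sum>j\<in>G. \<beta> j *\<^sub>R v j) \<le> B * S)"
  using assms
proof (induction G rule: finite_remove_induct)
  case empty
  show ?case
  proof (intro allI impI)
    fix \<beta> :: "nat \<Rightarrow> real" and B assume h: "\<forall>G'\<subseteq>{}. norm (\<Sum>j\<in>G'. v j) \<le> S" "0 \<le> (B::real) \<and> (\<forall>j\<in>{}. 0 \<le> \<beta> j \<and> \<beta> j \<le> B)"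
    then have "0 \<le> S" by auto
    then show "norm (\<Sum>j\<in>{}. \<beta> j *\<^sub>R v j) \<le> B * S" using h by simp
  qed
next
  case (remove A)
  show ?case
  proof (intro allI impI)
    fix \<beta> :: "nat \<Rightarrow> real" and B assume hS: "\<forall>G'\<subseteq>A. norm (\<Sum>j\<in>G'. v j) \<le> S"
      and hb: "0 \<le> (B::real) \<and> (\<forall>j\<in>A. 0 \<le> \<beta> j \<and> \<beta> j \<le> B)"
    have S0: "0 \<le> S" using hS[rule_format, of "{}"] by simp
    define b0 where "b0 = Min (\<beta> ` A)"
    have "b0 \<in> \<beta> ` A" unfolding b0_def using remove.hyps by (intro Min_in) auto
    then obtain i0 where i0: "i0 \<in> A" "\<beta> i0 = b0" by auto
    have b0le: "b0 \<le> \<beta> j" if "j \<in> A" for j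
      unfolding b0_def using remove.hyps that by (intro Min_le) auto
    have b0nn: "0 \<le> b0" "b0 \<le> B" using hb i0 by auto
    have IH: "norm (\<Sum>j\<in>A - {i0}. (\<beta> j - b0) *\<^sub>R v j) \<le> (B - b0) * S"
      using remove.IH[OF i0(1)] hS hb b0le b0nn by auto
    have "(\<Sum>j\<in>A. \<beta> j *\<^sub>R v j) = (\<Sum>j\<in>A. b0 *\<^sub>R v j + (\<beta> j - b0) *\<^sub>R v j)"
      by (rule sum.cong) (auto simp: algebra_simps)
    also have "\<dots> = b0 *\<^sub>R (\<Sum>j\<in>A. v j) + (\<Sum>j\<in>A. (\<beta> j - b0) *\<^sub>R v j)"
      by (simp add: sum.distrib scaleR_sum_right)
    also have "(\<Sum>j\<in>A. (\<beta> j - b0) *\<^sub>R v j) = (\<Sum>j\<in>A - {i0}. (\<beta> j - b0) *\<^sub>R v j)"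
      using sum.remove[OF remove.hyps(1) i0(1), of "\<lambda>j. (\<beta> j - b0) *\<^sub>R v j"] i0 by simp
    finally have eq: "(\<Sum>j\<in>A. \<beta> j *\<^sub>R v j) = b0 *\<^sub>R (\<Sum>j\<in>A. v j) + (\<Sum>j\<in>A - {i0}. (\<beta> j - b0) *\<^sub>R v j)" .
    have "norm (\<Sum>j\<in>A. \<beta> j *\<^sub>R v j) \<le> b0 * norm (\<Sum>j\<in>A. v j) + (B - b0) * S"
      unfolding eq using norm_triangle_le IH b0nn by (simp add: norm_triangle_le)
    also have "\<dots> \<le> b0 * S + (B - b0) * S"
      using hS b0nn by (simp add: mult_left_mono)
    finally show "norm (\<Sum>j\<in>A. \<beta> j *\<^sub>R v j) \<le> B * S" by (simp add: algebra_simps)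
  qed
qed

lemma mult_bound:
  fixes v :: "nat \<Rightarrow> 'a::real_normed_vector"
  assumes "finite G" "\<And>G'. G' \<subseteq> G \<Longrightarrow> norm (\<Sum>j\<in>G'. v j) \<le> S"
    and "\<And>j. j \<in> G \<Longrightarrow> \<bar>\<beta> j\<bar> \<le> B" and "0 \<le> B"
  shows "norm (\<Sum>j\<in>G. \<beta> j *\<^sub>R v j) \<le> 2 * B * S"
proof -
  have B0: "0 \<le> B" if "G \<noteq> {}" using assms(3) that by force
  have S0: "0 \<le> S" using assms(2)[of "{}"] by simp
  show ?thesis
  proof (cases "G = {}")
    case True then show ?thesis using S0 assms(4) by simp
  next
    case False
    have h1: "norm (\<Sum>j\<in>G. max (\<beta> j) 0 *\<^sub>R v j) \<le> B * S"
      using mult_bound_pos_aux[OF assms(1), of v S] assms(2,3) B0[OF False]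
      by (auto simp: abs_le_iff)
    have h2: "norm (\<Sum>j\<in>G. max (- \<beta> j) 0 *\<^sub>R v j) \<le> B * S"
      using mult_bound_pos_aux[OF assms(1), of v S] assms(2,3) B0[OF False]
      by (auto simp: abs_le_iff)
    have eq: "(\<Sum>j\<in>G. \<beta> j *\<^sub>R v j) = (\<Sum>j\<in>G. max (\<beta> j) 0 *\<^sub>R v j) - (\<Sum>j\<in>G. max (- \<beta> j) 0 *\<^sub>R v j)"
      unfolding sum_subtractf[symmetric]
      by (rule sum.cong) (auto simp: max_def algebra_simps)
    have "norm ((\<Sum>j\<in>G. max (\<beta> j) 0 *\<^sub>R v j) - (\<Sum>j\<in>G. max (- \<beta> j) 0 *\<^sub>R v j))
       \<le> norm (\<Sum>j\<in>G. max (\<beta> j) 0 *\<^sub>R v j) + norm (\<Sum>j\<in>G. max (- \<beta> j) 0 *\<^sub>R v j)"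
      by (rule norm_triangle_ineq4)
    also have "\<dots> \<le> B * S + B * S" by (rule add_mono[OF h1 h2])
    finally have "norm (\<Sum>j\<in>G. \<beta> j *\<^sub>R v j) \<le> B * S + B * S" unfolding eq .
    then show ?thesis by simp
  qed
qed

section \<open>Finite-dimensional Hahn-Banach\<close>

definition subsp :: "'v::real_vector set \<Rightarrow> bool" where
  "subsp L \<longleftrightarrow> 0 \<in> L \<and> (\<forall>x\<in>L. \<forall>y\<in>L. x + y \<in> L) \<and> (\<forall>x\<in>L. \<forall>t. t *\<^sub>R x \<in> L)"

definition lin_on :: "'v::real_vector set \<Rightarrow> ('v \<Rightarrow> real) \<Rightarrow> bool" where
  "lin_on L f \<longleftrightarrow> (\<forall>x\<in>L. \<forall>y\<in>L. f (x + y) = f x + f y) \<and> (\<forall>x\<in>L. \<forall>t. f (t *\<^sub>R x) = t * f x)"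

definition sublin :: "('v::real_vector \<Rightarrow> real) \<Rightarrow> bool" where
  "sublin p \<longleftrightarrow> (\<forall>x y. p (x + y) \<le> p x + p y) \<and> (\<forall>x t. 0 \<le> t \<longrightarrow> p (t *\<^sub>R x) = t * p x)"

definition ext1 :: "'v::real_vector set \<Rightarrow> 'v \<Rightarrow> 'v set" where
  "ext1 L w = {l + t *\<^sub>R w | l t. l \<in> L}"

lemma subsp_ext1: "subsp L \<Longrightarrow> subsp (ext1 L w)"
  unfolding subsp_def ext1_def
proof (intro conjI ballI allI)
  assume L: "0 \<in> L \<and> (\<forall>x\<in>L. \<forall>y\<in>L. x + y \<in> L) \<and> (\<forall>x\<in>L. \<forall>t. t *\<^sub>R x \<in> L)"
  have "(0::'a) = 0 + 0 *\<^sub>R w \<and> 0 \<in> L" using L by simp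
  then show "0 \<in> {l + t *\<^sub>R w |l t. l \<in> L}" by blast
  fix x y assume "x \<in> {l + t *\<^sub>R w |l t. l \<in> L}" "y \<in> {l + t *\<^sub>R w |l t. l \<in> L}"
  then obtain l1 t1 l2 t2 where "x = l1 + t1 *\<^sub>R w" "y = l2 + t2 *\<^sub>R w" "l1 \<in> L" "l2 \<in> L" by auto
  then show "x + y \<in> {l + t *\<^sub>R w |l t. l \<in> L}" using L
    by (auto intro!: exI[of _ "l1 + l2"] exI[of _ "t1 + t2"] simp: algebra_simps)
next
  fix x t
  assume L: "0 \<in> L \<and> (\<forall>x\<in>L. \<forall>y\<in>L. x + y \<in> L) \<and> (\<forall>x\<in>L. \<forall>t. t *\<^sub>R x \<in> L)"
    and "x \<in> {l + t *\<^sub>R w |l t. l \<in> L}"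
  then obtain l1 t1 where "x = l1 + t1 *\<^sub>R w" "l1 \<in> L" by auto
  then show "t *\<^sub>R x \<in> {l + t *\<^sub>R w |l t. l \<in> L}" using L
    by (auto intro!: exI[of _ "t *\<^sub>R l1"] exI[of _ "t * t1"] simp: algebra_simps)
qed

lemma ext1_sub: "subsp L \<Longrightarrow> L \<subseteq> ext1 L w"
proof
  fix x assume "x \<in> L"
  then have "x = x + 0 *\<^sub>R w \<and> x \<in> L" by simp
  then show "x \<in> ext1 L w" unfolding ext1_def by blast
qed

lemma ext1_mem: "subsp L \<Longrightarrow> w \<in> ext1 L w"
  unfolding ext1_def subsp_def by (auto intro!: exI[of _ 0] exI[of _ 1])

lemma HB1:
  assumes L: "subsp L" and p: "sublin p" and f: "lin_on L f" and fp: "\<forall>l\<in>L. f l \<le> p l"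
  shows "\<exists>F. lin_on (ext1 L w) F \<and> (\<forall>l\<in>L. F l = f l) \<and> (\<forall>g\<in>ext1 L w. F g \<le> p g)"
proof (cases "w \<in> L")
  case True
  have "ext1 L w = L"
  proof
    show "ext1 L w \<subseteq> L" using True L unfolding ext1_def subsp_def by auto
  qed (rule ext1_sub[OF L])
  then show ?thesis using f fp by auto
next
  case False
  have L0: "0 \<in> L" and Ladd: "\<And>x y. x \<in> L \<Longrightarrow> y \<in> L \<Longrightarrow> x + y \<in> L"
    and Lsc: "\<And>x t. x \<in> L \<Longrightarrow> t *\<^sub>R x \<in> L" using L unfolding subsp_def by auto
  have fadd: "\<And>x y. x \<in> L \<Longrightarrow> y \<in> L \<Longrightarrow> f (x + y) = f x + f y"
    and fsc: "\<And>x t. x \<in> L \<Longrightarrow> f (t *\<^sub>R x) = t * f x" using f unfolding lin_on_def by auto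
  have padd: "\<And>x y. p (x + y) \<le> p x + p y" and psc: "\<And>x t. 0 \<le> t \<Longrightarrow> p (t *\<^sub>R x) = t * p x"
    using p unfolding sublin_def by auto
  have key: "f l1 - p (l1 - w) \<le> p (l2 + w) - f l2" if "l1 \<in> L" "l2 \<in> L" for l1 l2
  proof -
    have "f l1 + f l2 = f (l1 + l2)" using fadd that by simp
    also have "\<dots> \<le> p (l1 + l2)" using fp Ladd that by auto
    also have "l1 + l2 = (l1 - w) + (l2 + w)" by simp
    also have "p \<dots> \<le> p (l1 - w) + p (l2 + w)" by (rule padd)
    finally show ?thesis by simp
  qed
  define S where "S = {f l - p (l - w) | l. l \<in> L}"
  define c0 where "c0 = Sup S"
  have Sne: "S \<noteq> {}" using L0 unfolding S_def by auto
  have Sbdd: "bdd_above S" unfolding S_def bdd_above_def using key[OF _ L0] by auto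
  have c0_ge: "f l - p (l - w) \<le> c0" if "l \<in> L" for l
    unfolding c0_def using Sbdd that by (auto intro!: cSup_upper simp: S_def)
  have c0_le: "c0 \<le> p (l + w) - f l" if "l \<in> L" for l
    unfolding c0_def using Sne key[OF _ that] by (auto intro!: cSup_least simp: S_def)
  have uniq: "l1 = l2 \<and> t1 = t2" if "l1 \<in> L" "l2 \<in> L" "l1 + t1 *\<^sub>R w = l2 + t2 *\<^sub>R w" for l1 l2 t1 t2
  proof (cases "t1 = t2")
    case True then show ?thesis using that by simp
  next
    case False
    have "(t1 - t2) *\<^sub>R w = l2 - l1" using that(3) by (simp add: algebra_simps)
    then have "w = (1 / (t1 - t2)) *\<^sub>R (l2 - l1)" using False
      by (metis (no_types, lifting) divide_inverse_commute divide_self_if eq_iff_diff_eq_0 inverse_eq_divide scaleR_one scaleR_scaleR)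
    moreover have "l2 - l1 \<in> L" using Ladd[OF that(2) Lsc[OF that(1), of "-1"]] by simp
    ultimately have "w \<in> L" using Lsc by simp
    then show ?thesis using False \<open>w \<notin> L\<close> by simp
  qed
  define F where "F g = (let r = (SOME r. fst r \<in> L \<and> g = fst r + snd r *\<^sub>R w) in f (fst r) + snd r * c0)" for g
  have Fv: "F (l + t *\<^sub>R w) = f l + t * c0" if "l \<in> L" for l t
  proof -
    let ?r = "SOME r. fst r \<in> L \<and> l + t *\<^sub>R w = fst r + snd r *\<^sub>R w"
    have "fst ?r \<in> L \<and> l + t *\<^sub>R w = fst ?r + snd ?r *\<^sub>R w"
      by (rule someI[of _ "(l, t)"]) (use that in auto)
    then have "fst ?r = l \<and> snd ?r = t" using uniq[of "fst ?r" l "snd ?r" t] that by auto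
    then show ?thesis unfolding F_def Let_def by simp
  qed
  have lin: "lin_on (ext1 L w) F"
    unfolding lin_on_def
  proof (intro conjI ballI allI)
    fix x y assume "x \<in> ext1 L w" "y \<in> ext1 L w"
    then obtain l1 t1 l2 t2 where xy: "x = l1 + t1 *\<^sub>R w" "y = l2 + t2 *\<^sub>R w" "l1 \<in> L" "l2 \<in> L"
      unfolding ext1_def by auto
    have e: "x + y = (l1 + l2) + (t1 + t2) *\<^sub>R w" using xy by (simp add: algebra_simps)
    have "F (x + y) = f (l1 + l2) + (t1 + t2) * c0" unfolding e by (rule Fv) (rule Ladd[OF xy(3,4)])
    then show "F (x + y) = F x + F y" using xy(1,2) Fv[OF xy(3)] Fv[OF xy(4)] fadd[OF xy(3,4)]
      by (simp add: algebra_simps)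
  next
    fix x t assume "x \<in> ext1 L w"
    then obtain l1 t1 where xy: "x = l1 + t1 *\<^sub>R w" "l1 \<in> L" unfolding ext1_def by auto
    have e: "t *\<^sub>R x = t *\<^sub>R l1 + (t * t1) *\<^sub>R w" using xy by (simp add: algebra_simps)
    have "F (t *\<^sub>R x) = f (t *\<^sub>R l1) + (t * t1) * c0" unfolding e by (rule Fv) (rule Lsc[OF xy(2)])
    then show "F (t *\<^sub>R x) = t * F x" using xy(1) Fv[OF xy(2)] fsc[OF xy(2)]
      by (simp add: algebra_simps)
  qed
  have ext: "\<forall>l\<in>L. F l = f l" using Fv[of _ 0] by simp
  have bnd: "F g \<le> p g" if "g \<in> ext1 L w" for g
  proof -
    obtain l t where g: "g = l + t *\<^sub>R w" "l \<in> L" using \<open>g \<in> ext1 L w\<close> unfolding ext1_def by auto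
    consider "t = 0" | "t > 0" | "t < 0" by linarith
    then have "f l + t * c0 \<le> p (l + t *\<^sub>R w)"
    proof cases
      case 1 then show ?thesis using fp g by simp
    next
      case 2
      have l': "(1/t) *\<^sub>R l \<in> L" using Lsc g by simp
      have "c0 \<le> p ((1/t) *\<^sub>R l + w) - f ((1/t) *\<^sub>R l)" by (rule c0_le[OF l'])
      also have "(1/t) *\<^sub>R l + w = (1/t) *\<^sub>R (l + t *\<^sub>R w)" using 2 by (simp add: algebra_simps)
      also have "p \<dots> = (1/t) * p (l + t *\<^sub>R w)" using 2 psc by simp
      also have "f ((1/t) *\<^sub>R l) = (1/t) * f l" using fsc g by simp
      finally have "t * c0 \<le> t * ((1/t) * p (l + t *\<^sub>R w) - (1/t) * f l)"
        using 2 by (simp add: mult_left_mono)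
      then show ?thesis using 2 by (simp add: algebra_simps)
    next
      case 3
      define s where "s = - t"
      have s: "s > 0" using 3 s_def by simp
      have l': "(1/s) *\<^sub>R l \<in> L" using Lsc g by simp
      have "f ((1/s) *\<^sub>R l) - p ((1/s) *\<^sub>R l - w) \<le> c0" by (rule c0_ge[OF l'])
      also have "(1/s) *\<^sub>R l - w = (1/s) *\<^sub>R (l + t *\<^sub>R w)" using s by (simp add: s_def algebra_simps)
      also have "p \<dots> = (1/s) * p (l + t *\<^sub>R w)" using s psc by simp
      also have "f ((1/s) *\<^sub>R l) = (1/s) * f l" using fsc g by simp
      finally have "s * ((1/s) * f l - (1/s) * p (l + t *\<^sub>R w)) \<le> s * c0"
        using s by (simp add: mult_left_mono)
      then show ?thesis using s by (simp add: s_def algebra_simps)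
    qed
    then show ?thesis using Fv g by simp
  qed
  show ?thesis using lin ext bnd by blast
qed

fun extn :: "'v::real_vector set \<Rightarrow> 'v list \<Rightarrow> 'v set" where
  "extn L [] = L"
| "extn L (w # ws) = ext1 (extn L ws) w"

lemma extn_props:
  assumes "subsp L"
  shows "subsp (extn L ws) \<and> L \<subseteq> extn L ws \<and> set ws \<subseteq> extn L ws"
proof (induction ws)
  case Nil then show ?case using assms by simp
next
  case (Cons w ws)
  then show ?case using subsp_ext1 ext1_sub ext1_mem by (simp; blast)
qed

lemma HBn:
  assumes L: "subsp L" and p: "sublin p" and f: "lin_on L f" and fp: "\<forall>l\<in>L. f l \<le> p l"
  shows "\<exists>F. lin_on (extn L ws) F \<and> (\<forall>l\<in>L. F l = f l) \<and> (\<forall>g\<in>extn L ws. F g \<le> p g)"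
proof (induction ws)
  case Nil then show ?case using f fp by auto
next
  case (Cons w ws)
  then obtain F where F: "lin_on (extn L ws) F" "\<forall>l\<in>L. F l = f l" "\<forall>g\<in>extn L ws. F g \<le> p g" by blast
  obtain F' where "lin_on (ext1 (extn L ws) w) F'" "\<forall>l\<in>extn L ws. F' l = F l"
    "\<forall>g\<in>ext1 (extn L ws) w. F' g \<le> p g"
    using HB1[OF conjunct1[OF extn_props[OF L]] p F(1) F(3)] by blast
  moreover have "\<forall>l\<in>L. F' l = f l" using F(2) \<open>\<forall>l\<in>extn L ws. F' l = F l\<close> extn_props[OF L, of ws] by auto
  ultimately show ?case by auto
qed

lemma lin_on_sum:
  assumes E: "subsp E" and F: "lin_on E F" and I: "finite I" and u: "\<forall>i\<in>I. u i \<in> E"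
  shows "(\<Sum>i\<in>I. t i *\<^sub>R u i) \<in> E \<and> F (\<Sum>i\<in>I. t i *\<^sub>R u i) = (\<Sum>i\<in>I. t i * F (u i))"
  using I u
proof (induction I rule: finite_induct)
  case empty
  have "0 \<in> E" using E by (simp add: subsp_def)
  then have "F (0 *\<^sub>R 0) = 0 * F 0" using F unfolding lin_on_def by blast
  then show ?case using \<open>0 \<in> E\<close> by simp
next
  case (insert i I)
  have ti: "t i *\<^sub>R u i \<in> E" using E insert.prems unfolding subsp_def by auto
  have IH: "(\<Sum>i\<in>I. t i *\<^sub>R u i) \<in> E" "F (\<Sum>i\<in>I. t i *\<^sub>R u i) = (\<Sum>i\<in>I. t i * F (u i))"
    using insert by auto
  have "F (t i *\<^sub>R u i + (\<Sum>i\<in>I. t i *\<^sub>R u i)) = F (t i *\<^sub>R u i) + F (\<Sum>i\<in>I. t i *\<^sub>R u i)"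
    using F ti IH(1) unfolding lin_on_def by blast
  moreover have "F (t i *\<^sub>R u i) = t i * F (u i)" using F insert.prems unfolding lin_on_def by blast
  moreover have "t i *\<^sub>R u i + (\<Sum>i\<in>I. t i *\<^sub>R u i) \<in> E" using E ti IH(1) unfolding subsp_def by blast
  ultimately show ?case using insert IH by simp
qed

lemma baire_ball:
  fixes F :: "nat \<Rightarrow> 'a::banach set"
  assumes "\<Union>(range F) = UNIV"
  shows "\<exists>k v0 r. r>0 \<and> ball v0 r \<subseteq> closure (F k)"
proof (rule ccontr)
  assume H: "\<not> ?thesis"
  have "euclidean interior_of \<Union>(range (\<lambda>k. closure (F k))) = {}"
  proof (rule Baire_category_alt)
    show "completely_metrizable_space (euclidean::'a topology) \<or> locally_compact_space (euclidean::'a topology) \<and> regular_space (euclidean::'a topology)"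
      using completely_metrizable_space_euclidean by blast
    show "countable (range (\<lambda>k. closure (F k)))" by simp
    fix T assume "T \<in> range (\<lambda>k. closure (F k))"
    then obtain k where T: "T = closure (F k)" by auto
    have "interior T = {}"
    proof (rule ccontr)
      assume "interior T \<noteq> {}"
      then obtain v where "v \<in> interior T" by auto
      then obtain r where "r>0" "ball v r \<subseteq> T"
        by (meson mem_interior)
      with H T show False by blast
    qed
    then show "closedin euclidean T \<and> euclidean interior_of T = {}"
      using T by simp
  qed
  moreover have "\<Union>(range (\<lambda>k. closure (F k))) = UNIV"
    using assms closure_subset by blast
  ultimately show False by simp
qed

definition PP :: "(nat \<Rightarrow> 'a::banach) \<Rightarrow> nat set \<Rightarrow> 'a \<Rightarrow> 'a" where
  "PP z G v = (\<Sum>i\<in>G. coord z i v *\<^sub>R z i)"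

definition pp :: "(nat \<Rightarrow> 'a::banach) \<Rightarrow> nat set set \<Rightarrow> 'a \<Rightarrow> real" where
  "pp z \<G> v = (SUP G\<in>\<G>. norm (PP z G v))"

lemma PP_add: "schauder_basis z \<Longrightarrow> PP z G (u + v) = PP z G u + PP z G v"
  unfolding PP_def by (simp add: coord_add scaleR_add_left sum.distrib)

lemma PP_scale: "schauder_basis z \<Longrightarrow> PP z G (t *\<^sub>R v) = t *\<^sub>R PP z G v"
  unfolding PP_def by (simp add: coord_scale scaleR_sum_right)

lemma PP_tendsto: "schauder_basis z \<Longrightarrow> (\<lambda>N. PP z {..<N} v) \<longlonglongrightarrow> v"
  using coord_sums[of z v] unfolding PP_def sums_def by simp

context
  fixes z :: "nat \<Rightarrow> 'a::banach" and \<G> :: "nat set set"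
  assumes sb: "schauder_basis z" and nz: "\<And>i. norm (z i) = 1"
    and init: "\<And>N. {..<N} \<in> \<G>"
    and bdd: "\<And>v. bdd_above ((\<lambda>G. norm (PP z G v)) ` \<G>)"
begin

lemma G_ne: "\<G> \<noteq> {}" using init by blast

lemma pp_ge: "G \<in> \<G> \<Longrightarrow> norm (PP z G v) \<le> pp z \<G> v"
  unfolding pp_def by (rule cSUP_upper[OF _ bdd])

lemma pp_nonneg: "0 \<le> pp z \<G> v"
  using pp_ge[OF init[of 0], of v] by (simp add: PP_def)

lemma norm_le_pp: "norm v \<le> pp z \<G> v"
proof (rule LIMSEQ_le_const2)
  show "(\<lambda>N. norm (PP z {..<N} v)) \<longlonglongrightarrow> norm v" using PP_tendsto[OF sb] by (rule tendsto_norm)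
  show "\<exists>N. \<forall>n\<ge>N. norm (PP z {..<n} v) \<le> pp z \<G> v" using pp_ge[OF init] by blast
qed

lemma coord_le_pp: "\<bar>coord z i v\<bar> \<le> 2 * pp z \<G> v"
proof -
  have "coord z i v *\<^sub>R z i = PP z {..<Suc i} v - PP z {..<i} v" by (simp add: PP_def)
  then have "\<bar>coord z i v\<bar> = norm (PP z {..<Suc i} v - PP z {..<i} v)"
    by (metis norm_scaleR nz mult.right_neutral)
  also have "\<dots> \<le> norm (PP z {..<Suc i} v) + norm (PP z {..<i} v)" by (rule norm_triangle_ineq4)
  also have "\<dots> \<le> pp z \<G> v + pp z \<G> v" using pp_ge[OF init] by (intro add_mono)
  finally show ?thesis by simp
qed

lemma pp_add: "pp z \<G> (u + v) \<le> pp z \<G> u + pp z \<G> v"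
  unfolding pp_def[of z \<G> "u+v"]
proof (rule cSUP_least[OF G_ne])
  fix G assume G: "G \<in> \<G>"
  have "norm (PP z G (u + v)) \<le> norm (PP z G u) + norm (PP z G v)"
    by (simp add: PP_add[OF sb] norm_triangle_ineq)
  also have "\<dots> \<le> pp z \<G> u + pp z \<G> v" using pp_ge[OF G] by (intro add_mono)
  finally show "norm (PP z G (u + v)) \<le> pp z \<G> u + pp z \<G> v" .
qed

lemma pp_scale: "pp z \<G> (t *\<^sub>R v) \<le> \<bar>t\<bar> * pp z \<G> v"
  unfolding pp_def[of z \<G> "t *\<^sub>R v"]
proof (rule cSUP_least[OF G_ne])
  fix G assume G: "G \<in> \<G>"
  have "norm (PP z G (t *\<^sub>R v)) = \<bar>t\<bar> * norm (PP z G v)" by (simp add: PP_scale[OF sb])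
  also have "\<dots> \<le> \<bar>t\<bar> * pp z \<G> v" using pp_ge[OF G] by (intro mult_left_mono) auto
  finally show "norm (PP z G (t *\<^sub>R v)) \<le> \<bar>t\<bar> * pp z \<G> v" .
qed

lemma pp_zero: "pp z \<G> 0 \<le> 0"
  using pp_scale[of 0 0] by simp

lemma pp_suminf:
  assumes ws: "w sums v" and sp: "summable (\<lambda>j. pp z \<G> (w j))"
  shows "pp z \<G> v \<le> (\<Sum>j. pp z \<G> (w j))"
proof -
  define cc where "cc j i = coord z i (w j)" for j i
  have sumP: "summable (\<lambda>j. 2 * pp z \<G> (w j))" using sp by (rule summable_mult)
  have scc: "summable (\<lambda>j. cc j i)" for i
    by (rule summable_comparison_test'[OF sumP, of 0]) (simp add: cc_def coord_le_pp)
  define c where "c i = (\<Sum>j. cc j i)" for i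
  have ccs: "(\<lambda>j. cc j i) sums c i" for i unfolding c_def using scc by (rule summable_sums)
  have PPs: "(\<lambda>j. PP z G (w j)) sums (\<Sum>i\<in>G. c i *\<^sub>R z i)" for G
  proof -
    have "(\<lambda>j. \<Sum>i\<in>G. cc j i *\<^sub>R z i) sums (\<Sum>i\<in>G. c i *\<^sub>R z i)"
      by (rule sums_sum) (rule sums_scaleR_left[OF ccs])
    then show ?thesis by (simp add: PP_def cc_def)
  qed
  have conv: "(\<lambda>N. \<Sum>i<N. c i *\<^sub>R z i) \<longlonglongrightarrow> v"
  proof -
    define g where "g N j = PP z {..<N} (w j) - w j" for N j
    have gs: "(\<lambda>j. g N j) sums ((\<Sum>i<N. c i *\<^sub>R z i) - v)" for N
      unfolding g_def by (rule sums_diff[OF PPs ws])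
    have gb: "norm (g N j) \<le> 2 * pp z \<G> (w j)" for N j
    proof -
      have "norm (g N j) \<le> norm (PP z {..<N} (w j)) + norm (w j)"
        unfolding g_def by (rule norm_triangle_ineq4)
      also have "\<dots> \<le> pp z \<G> (w j) + pp z \<G> (w j)"
        using pp_ge[OF init] norm_le_pp by (intro add_mono)
      finally show ?thesis by simp
    qed
    have sn: "summable (\<lambda>j. norm (g N j))" for N
      by (rule summable_comparison_test'[OF sumP, of 0]) (simp add: gb)
    have le: "norm ((\<Sum>i<N. c i *\<^sub>R z i) - v) \<le> (\<Sum>j. norm (g N j))" for N
    proof -
      have "(\<Sum>i<N. c i *\<^sub>R z i) - v = (\<Sum>j. g N j)" using gs[of N] by (simp add: sums_iff)
      then show ?thesis using summable_norm[OF sn[of N]] by simp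
    qed
    have lim0: "(\<lambda>N. \<Sum>j. norm (g N j)) \<longlonglongrightarrow> 0"
    proof -
      have t: "eventually (\<lambda>n. summable (\<lambda>k. norm (norm (g n k)))) sequentially \<and>
           summable (\<lambda>n. norm ((\<lambda>_. 0::real) n)) \<and>
           ((\<lambda>n. suminf (\<lambda>k. norm (g n k))) \<longlonglongrightarrow> suminf (\<lambda>_. 0::real))"
      proof (rule tannerys_theorem[where M = "\<lambda>k. 2 * pp z \<G> (w k)"])
        fix k
        have "(\<lambda>n. PP z {..<n} (w k) - w k) \<longlonglongrightarrow> 0"
          using PP_tendsto[OF sb, of "w k"] by (simp add: LIM_zero)
        then show "(\<lambda>n. norm (g n k)) \<longlonglongrightarrow> 0" unfolding g_def by (rule tendsto_norm_zero)
      next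
        show "\<forall>\<^sub>F (k, n) in sequentially \<times>\<^sub>F sequentially. norm (norm (g n k)) \<le> 2 * pp z \<G> (w k)"
          by (rule always_eventually) (auto simp: gb)
      qed (use sumP in auto)
      then show ?thesis by simp
    qed
    have "(\<lambda>N. (\<Sum>i<N. c i *\<^sub>R z i) - v) \<longlonglongrightarrow> 0"
      by (rule Lim_null_comparison[OF always_eventually lim0]) (use le in auto)
    then show ?thesis by (simp add: LIM_zero_iff)
  qed
  have cv: "coord z i v = c i" for i
    by (rule coord_unique[OF sb]) (use conv in \<open>simp add: sums_def\<close>)
  show ?thesis
    unfolding pp_def[of z \<G> v]
  proof (rule cSUP_least[OF G_ne])
    fix G assume G: "G \<in> \<G>"
    have "PP z G v = (\<Sum>j. PP z G (w j))"
      using PPs[of G] by (simp add: PP_def cv sums_iff)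
    also have "norm \<dots> \<le> (\<Sum>j. pp z \<G> (w j))"
      by (rule norm_suminf_le[OF pp_ge[OF G] sp])
    finally show "norm (PP z G v) \<le> (\<Sum>j. pp z \<G> (w j))" .
  qed
qed

lemma pp_bound: "\<exists>C>0. \<forall>v. pp z \<G> v \<le> C * norm v"
proof -
  define Fk where "Fk k = {v. pp z \<G> v \<le> real k}" for k
  have "\<Union>(range Fk) = UNIV"
  proof -
    have "v \<in> \<Union>(range Fk)" for v
    proof -
      obtain k where "pp z \<G> v \<le> real k" using real_arch_simple by blast
      then show ?thesis unfolding Fk_def by blast
    qed
    then show ?thesis by blast
  qed
  then obtain k v0 r where r: "r > 0" and ball: "ball v0 r \<subseteq> closure (Fk k)"
    using baire_ball by blast
  have ap1: "\<exists>w. pp z \<G> w \<le> real k \<and> norm (u - w) < \<epsilon>" if u: "norm u < r" and e: "\<epsilon> > 0" for u \<epsilon>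
  proof -
    have "v0 + u \<in> closure (Fk k)" "v0 - u \<in> closure (Fk k)"
      using ball u by (auto simp: dist_norm)
    then obtain w1 w2 where w1: "w1 \<in> Fk k" "dist w1 (v0 + u) < \<epsilon>"
      and w2: "w2 \<in> Fk k" "dist w2 (v0 - u) < \<epsilon>"
      using e unfolding closure_approachable by meson
    define w where "w = (1/2) *\<^sub>R (w1 - w2)"
    have "pp z \<G> w \<le> (1/2) * pp z \<G> (w1 - w2)" unfolding w_def using pp_scale[of "1/2"] by simp
    also have "pp z \<G> (w1 - w2) \<le> pp z \<G> w1 + pp z \<G> ((-1) *\<^sub>R w2)"
      using pp_add[of w1 "(-1) *\<^sub>R w2"] by simp
    also have "pp z \<G> ((-1) *\<^sub>R w2) \<le> pp z \<G> w2" using pp_scale[of "-1" w2] by simp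
    finally have "pp z \<G> w \<le> (1/2) * (pp z \<G> w1 + pp z \<G> w2)" by simp
    also have "\<dots> \<le> (1/2) * (real k + real k)" using w1 w2 unfolding Fk_def by simp
    finally have pw: "pp z \<G> w \<le> real k" by simp
    have hh: "(1/2::real) *\<^sub>R u + (1/2::real) *\<^sub>R u = u"
      by (metis scaleR_add_left field_sum_of_halves scaleR_one)
    have "u - w = (1/2) *\<^sub>R ((v0 + u - w1) - (v0 - u - w2))" unfolding w_def
      by (simp add: algebra_simps hh)
    then have "norm (u - w) \<le> (1/2) * (norm (v0 + u - w1) + norm (v0 - u - w2))"
      using norm_triangle_ineq4[of "v0 + u - w1" "v0 - u - w2"] by simp
    also have "\<dots> < (1/2) * (\<epsilon> + \<epsilon>)"
      using w1(2) w2(2) by (simp add: dist_norm norm_minus_commute)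
    finally show ?thesis using pw by auto
  qed
  define D where "D = 2 * real k / r"
  have D0: "0 \<le> D" unfolding D_def using r by simp
  have ap2: "\<exists>w. pp z \<G> w \<le> D * norm u \<and> norm (u - w) < \<epsilon>" if e: "\<epsilon> > 0" for u \<epsilon>
  proof (cases "u = 0")
    case True then show ?thesis using e pp_zero by (auto intro!: exI[of _ 0])
  next
    case False
    define t where "t = r / (2 * norm u)"
    have t: "t > 0" using False r by (simp add: t_def)
    have "norm (t *\<^sub>R u) = r / 2" using False r t by (simp add: t_def)
    then have "norm (t *\<^sub>R u) < r" using r by simp
    then obtain w' where w': "pp z \<G> w' \<le> real k" "norm (t *\<^sub>R u - w') < \<epsilon> * t"
      using ap1 e t by (meson mult_pos_pos)
    define w where "w = (1/t) *\<^sub>R w'"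
    have "pp z \<G> w \<le> (1/t) * pp z \<G> w'" unfolding w_def using pp_scale[of "1/t" w'] t by simp
    also have "\<dots> \<le> (1/t) * real k" using w' t by (intro mult_left_mono) auto
    also have "(1/t) * real k = D * norm u" unfolding t_def D_def using False r by (simp add: field_simps)
    finally have pw: "pp z \<G> w \<le> D * norm u" .
    have "u - w = (1/t) *\<^sub>R (t *\<^sub>R u - w')" unfolding w_def using t by (simp add: algebra_simps)
    then have "norm (u - w) = norm (t *\<^sub>R u - w') / t" using t by simp
    also have "\<dots> < \<epsilon>" using w' t by (simp add: pos_divide_less_eq)
    finally show ?thesis using pw by blast
  qed
  have "\<forall>u. \<exists>Wu. \<forall>\<epsilon>. \<epsilon> > 0 \<longrightarrow> pp z \<G> (Wu \<epsilon>) \<le> D * norm u \<and> norm (u - Wu \<epsilon>) < \<epsilon>"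
  proof
    fix u
    have "\<forall>\<epsilon>. \<exists>w. \<epsilon> > 0 \<longrightarrow> pp z \<G> w \<le> D * norm u \<and> norm (u - w) < \<epsilon>" using ap2 by blast
    then show "\<exists>Wu. \<forall>\<epsilon>. \<epsilon> > 0 \<longrightarrow> pp z \<G> (Wu \<epsilon>) \<le> D * norm u \<and> norm (u - Wu \<epsilon>) < \<epsilon>"
      by (rule choice)
  qed
  then obtain W where W: "\<And>u \<epsilon>. \<epsilon> > 0 \<Longrightarrow> pp z \<G> (W u \<epsilon>) \<le> D * norm u \<and> norm (u - W u \<epsilon>) < \<epsilon>"
    by (metis choice)
  have pvb: "pp z \<G> v \<le> 2 * D * norm v" for v
  proof (cases "v = 0")
    case True then show ?thesis using pp_zero by simp
  next
    case False
    define e where "e = norm v"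
    have e: "e > 0" using False by (simp add: e_def)
    define U where "U = rec_nat v (\<lambda>j u. u - W u (e * (1/2)^Suc j))"
    define ww where "ww j = W (U j) (e * (1/2)^Suc j)" for j
    have U0: "U 0 = v" by (simp add: U_def)
    have US: "U (Suc j) = U j - ww j" for j by (simp add: U_def ww_def)
    have nU: "norm (U j) \<le> e * (1/2)^j" for j
    proof (induction j)
      case 0 then show ?case by (simp add: U0 e_def)
    next
      case (Suc j)
      have "norm (U (Suc j)) < e * (1/2)^Suc j"
        unfolding US ww_def using W[of "e * (1/2)^Suc j" "U j"] e by simp
      then show ?case by simp
    qed
    have pw: "pp z \<G> (ww j) \<le> (D * e) * (1/2)^j" for j
    proof -
      have "pp z \<G> (ww j) \<le> D * norm (U j)" unfolding ww_def using W[of "e * (1/2)^Suc j" "U j"] e by simp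
      also have "\<dots> \<le> D * (e * (1/2)^j)" using nU D0 by (simp add: mult_left_mono)
      finally show ?thesis by simp
    qed
    have psum: "(\<Sum>j<J. ww j) = v - U J" for J
      by (induction J) (simp_all add: U0 US)
    have Ulim: "U \<longlonglongrightarrow> 0"
    proof (rule Lim_null_comparison[OF always_eventually])
      show "\<forall>j. norm (U j) \<le> e * (1/2)^j" using nU by blast
      show "(\<lambda>j. e * (1/2::real)^j) \<longlonglongrightarrow> 0"
        by (rule tendsto_mult_right_zero, rule LIMSEQ_power_zero) simp
    qed
    have wsum: "ww sums v"
    proof -
      have "(\<lambda>J. v - U J) \<longlonglongrightarrow> v - 0" by (intro tendsto_intros Ulim)
      then show ?thesis unfolding sums_def psum by simp
    qed
    have gs: "(\<lambda>j. (D * e) * (1/2::real)^j) sums ((D * e) * (1 / (1 - 1/2)))"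
      by (rule sums_mult, rule geometric_sums) simp
    have sp: "summable (\<lambda>j. pp z \<G> (ww j))"
      by (rule summable_comparison_test'[OF sums_summable[OF gs], of 0]) (simp add: pw pp_nonneg)
    have "pp z \<G> v \<le> (\<Sum>j. pp z \<G> (ww j))" by (rule pp_suminf[OF wsum sp])
    also have "\<dots> \<le> (\<Sum>j. (D * e) * (1/2::real)^j)"
      by (rule suminf_le[OF pw sp sums_summable[OF gs]])
    also have "\<dots> = 2 * D * e" using gs by (simp add: sums_iff)
    finally show ?thesis by (simp add: e_def)
  qed
  show ?thesis
  proof (intro exI[of _ "2 * D + 1"] conjI allI)
    show "0 < 2 * D + 1" using D0 by simp
    fix v
    show "pp z \<G> v \<le> (2 * D + 1) * norm v"
    proof -
      have eq: "(2 * D + 1) * norm v = 2 * D * norm v + norm v" by (simp add: algebra_simps)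
      show ?thesis using pvb[of v] norm_ge_zero[of v] unfolding eq by linarith
    qed
  qed
qed

end

lemma y_const:
  assumes sb: "schauder_basis z" and nz: "\<And>i. norm (z i) = 1"
  shows "\<exists>C>0. (\<forall>v N. norm (PP z {..<N} v) \<le> C * norm v) \<and> (\<forall>v i. \<bar>coord z i v\<bar> \<le> C * norm v)"
proof -
  have bdd: "bdd_above ((\<lambda>G. norm (PP z G v)) ` range lessThan)" for v
  proof -
    have "convergent (\<lambda>N. PP z {..<N} v)" using PP_tendsto[OF sb] by (auto simp: convergent_def)
    then obtain B where "\<forall>N. norm (PP z {..<N} v) \<le> B"
      using convergent_imp_Bseq Bseq_def by metis
    then show ?thesis by (auto simp: bdd_above_def)
  qed
  obtain C where C: "C > 0" "\<forall>v. pp z (range lessThan) v \<le> C * norm v"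
    using pp_bound[OF sb nz _ bdd] by blast
  show ?thesis
  proof (intro exI[of _ "2 * C"] conjI allI)
    show "0 < 2 * C" using C by simp
    fix v N
    have "norm (PP z {..<N} v) \<le> pp z (range lessThan) v" by (rule pp_ge[OF sb nz _ bdd]) auto
    also have "\<dots> \<le> C * norm v" using C by blast
    also have "\<dots> \<le> 2 * C * norm v" using C by (simp add: mult_right_mono)
    finally show "norm (PP z {..<N} v) \<le> 2 * C * norm v" .
  next
    fix v i
    have "\<bar>coord z i v\<bar> \<le> 2 * pp z (range lessThan) v" by (rule coord_le_pp[OF sb nz _ bdd]) auto
    also have "\<dots> \<le> 2 * (C * norm v)" using C by simp
    finally show "\<bar>coord z i v\<bar> \<le> 2 * C * norm v" by simp
  qed
qed

lemma x_const:
  assumes sb: "schauder_basis z" and nz: "\<And>i. norm (z i) = 1" and un: "unconditional_basis z"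
  shows "\<exists>C>0. (\<forall>v G. finite G \<longrightarrow> norm (PP z G v) \<le> C * norm v) \<and> (\<forall>v i. \<bar>coord z i v\<bar> \<le> C * norm v)"
proof -
  have bdd: "bdd_above ((\<lambda>G. norm (PP z G v)) ` {G. finite G})" for v
  proof -
    let ?f = "\<lambda>i. coord z i v *\<^sub>R z i"
    have "(?f has_sum v) UNIV"
      using un[unfolded unconditional_basis_def, THEN conjunct2, rule_format, of "\<lambda>i. coord z i v" v]
        coord_sums[OF sb, of v] by simp
    then have "(sum ?f \<longlongrightarrow> v) (finite_subsets_at_top UNIV)" by (simp add: has_sum_def)
    then have "eventually (\<lambda>F. dist (sum ?f F) v < 1) (finite_subsets_at_top UNIV)"
      by (simp add: tendsto_iff)
    then have "\<exists>X. finite X \<and> X \<subseteq> UNIV \<and> (\<forall>Y. finite Y \<and> X \<subseteq> Y \<and> Y \<subseteq> UNIV \<longrightarrow> dist (sum ?f Y) v < 1)"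
      by (simp only: eventually_finite_subsets_at_top)
    then obtain X where X: "finite X" "\<forall>Y. finite Y \<and> X \<subseteq> Y \<and> Y \<subseteq> UNIV \<longrightarrow> dist (sum ?f Y) v < 1"
      by (elim exE conjE) simp
    have "norm (PP z G v) \<le> norm v + 1 + (\<Sum>i\<in>X. norm (?f i))" if G: "finite G" for G
    proof -
      have e: "sum ?f (G \<union> X) = sum ?f G + sum ?f (X - G)"
      proof -
        have "G \<union> X = G \<union> (X - G)" by auto
        then show ?thesis using sum.union_disjoint[of G "X - G" ?f] G X(1) by auto
      qed
      have "PP z G v = sum ?f (G \<union> X) - sum ?f (X - G)" using e by (simp add: PP_def)
      then have "norm (PP z G v) \<le> norm (sum ?f (G \<union> X)) + norm (sum ?f (X - G))"
        using norm_triangle_ineq4 by metis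
      moreover have "norm (sum ?f (G \<union> X)) \<le> norm v + 1"
      proof -
        have "dist (sum ?f (G \<union> X)) v < 1" using X(2) X(1) G by simp
        then show ?thesis using norm_triangle_ineq2[of "sum ?f (G \<union> X)" v]
          by (simp add: dist_norm)
      qed
      moreover have "norm (sum ?f (X - G)) \<le> (\<Sum>i\<in>X. norm (?f i))"
      proof -
        have "norm (sum ?f (X - G)) \<le> (\<Sum>i\<in>X - G. norm (?f i))" by (rule norm_sum)
        also have "\<dots> \<le> (\<Sum>i\<in>X. norm (?f i))" by (rule sum_mono2) (use X in auto)
        finally show ?thesis .
      qed
      ultimately show ?thesis by linarith
    qed
    then show ?thesis by (auto simp: bdd_above_def)
  qed
  have init: "\<And>N::nat. {..<N} \<in> {G. finite G}" by simp
  obtain C where C: "C > 0" "\<forall>v. pp z {G. finite G} v \<le> C * norm v"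
    using pp_bound[OF sb nz init bdd] by blast
  show ?thesis
  proof (intro exI[of _ "2 * C"] conjI allI impI)
    show "0 < 2 * C" using C by simp
    fix v and G :: "nat set" assume "finite G"
    then have "norm (PP z G v) \<le> pp z {G. finite G} v" by (intro pp_ge[OF sb nz init bdd]) auto
    also have "\<dots> \<le> C * norm v" using C by blast
    also have "\<dots> \<le> 2 * C * norm v" using C by (simp add: mult_right_mono)
    finally show "norm (PP z G v) \<le> 2 * C * norm v" .
  next
    fix v i
    have "\<bar>coord z i v\<bar> \<le> 2 * pp z {G. finite G} v" by (rule coord_le_pp[OF sb nz init bdd])
    also have "\<dots> \<le> 2 * (C * norm v)" using C by simp
    finally show "\<bar>coord z i v\<bar> \<le> 2 * C * norm v" by simp
  qed
qed

lemma strict_mono_cut: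
  assumes "strict_mono (m::nat \<Rightarrow> nat)"
  shows "\<exists>J. \<forall>j. j < J \<longleftrightarrow> m j < K"
proof -
  define J where "J = (LEAST j. K \<le> m j)"
  have ex: "K \<le> m K" using seq_suble[OF assms] by simp
  have "j < J \<longleftrightarrow> m j < K" for j
  proof
    assume "j < J" then show "m j < K" unfolding J_def using not_less_Least by fastforce
  next
    assume h: "m j < K"
    show "j < J"
    proof (rule ccontr)
      assume "\<not> j < J"
      then have "m J \<le> m j" using assms by (simp add: strict_mono_less_eq)
      moreover have "K \<le> m J" unfolding J_def by (rule LeastI[of "\<lambda>j. K \<le> m j" K, OF ex])
      ultimately show False using h by simp
    qed
  qed
  then show ?thesis by blast
qed

lemma reidx:
  assumes "strict_mono (m::nat \<Rightarrow> nat)" "\<And>j. j < J \<longleftrightarrow> m j < K"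
  shows "(\<Sum>j<J. g (m j)) = (\<Sum>i<K. (if i \<in> range m then g i else 0))"
proof -
  have "(\<Sum>i<K. (if i \<in> range m then g i else 0)) = sum g {i\<in>{..<K}. i \<in> range m}"
    by (rule sym, rule sum.inter_filter) simp
  also have "{i\<in>{..<K}. i \<in> range m} = m ` {..<J}" using assms(2) by auto
  also have "sum g (m ` {..<J}) = (\<Sum>j<J. g (m j))"
  proof -
    have "inj_on m {..<J}" using strict_mono_imp_inj_on[OF assms(1)] inj_on_subset by blast
    then show ?thesis using sum.reindex[of m "{..<J}" g] by simp
  qed
  finally show ?thesis by simp
qed

lemma unit_sum:
  fixes z :: "nat \<Rightarrow> 'a::real_normed_vector"
  assumes "inj h" "\<And>j. norm (z j) = 1"
  shows "norm (\<Sum>j\<in>{j. (if h j = i then 1 else 0) \<noteq> (0::real)}. (if h j = i then 1 else 0) *\<^sub>R z j) \<le> 1"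
proof (cases "i \<in> range h")
  case True
  then obtain j0 where j0: "i = h j0" by auto
  have "{j. (if h j = i then 1 else 0) \<noteq> (0::real)} = {j0}" using assms(1) j0 by (auto simp: inj_eq)
  then show ?thesis using j0 assms(2) by simp
next
  case False
  then have "{j. (if h j = i then 1 else 0) \<noteq> (0::real)} = {}" by auto
  then show ?thesis by simp
qed

context
  fixes x :: "nat \<Rightarrow> 'a::banach" and y :: "nat \<Rightarrow> 'b::banach" and m n :: "nat \<Rightarrow> nat"
    and Cx Cy :: real and K JM JN :: nat
  assumes sbx: "schauder_basis x" and nzx: "\<And>i. norm (x i) = 1"
    and sby: "schauder_basis y" and nzy: "\<And>i. norm (y i) = 1"
    and PPx: "\<And>v G. finite G \<Longrightarrow> norm (PP x G v) \<le> Cx * norm v"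
    and cx: "\<And>v i. \<bar>coord x i v\<bar> \<le> Cx * norm v"
    and PPy: "\<And>v N. norm (PP y {..<N} v) \<le> Cy * norm v"
    and cy: "\<And>v i. \<bar>coord y i v\<bar> \<le> Cy * norm v"
    and Cx0: "Cx > 0" and Cy0: "Cy > 0"
    and sm: "strict_mono m" and sn: "strict_mono n" and cov: "range m \<union> range n = UNIV"
    and JM: "\<And>j. j < JM \<longleftrightarrow> m j < K" and JN: "\<And>j. j < JN \<longleftrightarrow> n j < K"
begin

lemma injm: "inj m" using strict_mono_imp_inj_on[OF sm] .
lemma injn: "inj n" using strict_mono_imp_inj_on[OF sn] .

lemma finM: "c00 c \<Longrightarrow> finite {i. c (m i) \<noteq> 0}"
proof -
  assume "c00 c"
  have "{i. c (m i) \<noteq> 0} = m -` {i. c i \<noteq> 0}" by auto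
  then show ?thesis using finite_vimageI[OF \<open>c00 c\<close>[unfolded c00_def] injm] by simp
qed

lemma finN: "c00 c \<Longrightarrow> finite {i. c (n i) \<noteq> 0}"
proof -
  assume "c00 c"
  have "{i. c (n i) \<noteq> 0} = n -` {i. c i \<noteq> 0}" by auto
  then show ?thesis using finite_vimageI[OF \<open>c00 c\<close>[unfolded c00_def] injn] by simp
qed

lemma coordVX: "c00 c \<Longrightarrow> coord x j (\<Sum>i\<in>{i. c (m i) \<noteq> 0}. c (m i) *\<^sub>R x i) = c (m j)"
proof -
  assume c: "c00 c"
  have "coord x j (\<Sum>i\<in>{i. c (m i) \<noteq> 0}. c (m i) *\<^sub>R x i) = (if j \<in> {i. c (m i) \<noteq> 0} then c (m j) else 0)"
    by (rule coord_finite[OF sbx finM[OF c]])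
  then show ?thesis by auto
qed

lemma coordVY: "c00 c \<Longrightarrow> coord y j (\<Sum>i\<in>{i. c (n i) \<noteq> 0}. c (n i) *\<^sub>R y i) = c (n j)"
proof -
  assume c: "c00 c"
  have "coord y j (\<Sum>i\<in>{i. c (n i) \<noteq> 0}. c (n i) *\<^sub>R y i) = (if j \<in> {i. c (n i) \<noteq> 0} then c (n j) else 0)"
    by (rule coord_finite[OF sby finN[OF c]])
  then show ?thesis by auto
qed

lemma Wn_nonneg: "0 \<le> W_norm x y m n c"
  unfolding W_norm_def by (simp add: le_max_iff_disj)

lemma VX_le: "norm (\<Sum>i\<in>{i. c (m i) \<noteq> 0}. c (m i) *\<^sub>R x i) \<le> W_norm x y m n c"
  unfolding W_norm_def by simp

lemma VY_le: "norm (\<Sum>i\<in>{i. c (n i) \<noteq> 0}. c (n i) *\<^sub>R y i) \<le> W_norm x y m n c"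
  unfolding W_norm_def by simp

lemma c_bound: "c00 c \<Longrightarrow> \<bar>c i\<bar> \<le> (Cx + Cy) * W_norm x y m n c"
proof -
  assume c: "c00 c"
  have W0: "0 \<le> W_norm x y m n c" by (rule Wn_nonneg)
  show ?thesis
  proof (cases "i \<in> range m")
    case True
    then obtain j where j: "i = m j" by auto
    have "\<bar>c i\<bar> = \<bar>coord x j (\<Sum>i\<in>{i. c (m i) \<noteq> 0}. c (m i) *\<^sub>R x i)\<bar>" using coordVX[OF c] j by simp
    also have "\<dots> \<le> Cx * norm (\<Sum>i\<in>{i. c (m i) \<noteq> 0}. c (m i) *\<^sub>R x i)" by (rule cx)
    also have "\<dots> \<le> Cx * W_norm x y m n c" using VX_le Cx0 by (simp add: mult_left_mono)
    also have "\<dots> \<le> (Cx + Cy) * W_norm x y m n c" using W0 Cy0 by (simp add: mult_right_mono)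
    finally show ?thesis .
  next
    case False
    then have "i \<in> range n" using cov by auto
    then obtain j where j: "i = n j" by auto
    have "\<bar>c i\<bar> = \<bar>coord y j (\<Sum>i\<in>{i. c (n i) \<noteq> 0}. c (n i) *\<^sub>R y i)\<bar>" using coordVY[OF c] j by simp
    also have "\<dots> \<le> Cy * norm (\<Sum>i\<in>{i. c (n i) \<noteq> 0}. c (n i) *\<^sub>R y i)" by (rule cy)
    also have "\<dots> \<le> Cy * W_norm x y m n c" using VY_le Cy0 by (simp add: mult_left_mono)
    also have "\<dots> \<le> (Cx + Cy) * W_norm x y m n c" using W0 Cx0 by (simp add: mult_right_mono)
    finally show ?thesis .
  qed
qed

lemma S_bdd: "bdd_above {\<bar>\<Sum>i<K. a i * c i\<bar> | c. c00 c \<and> W_norm x y m n c \<le> 1}"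
proof -
  have "\<bar>\<Sum>i<K. a i * c i\<bar> \<le> (\<Sum>i<K. \<bar>a i\<bar>) * (Cx + Cy)" if c: "c00 c" "W_norm x y m n c \<le> 1" for c
  proof -
    have "\<bar>\<Sum>i<K. a i * c i\<bar> \<le> (\<Sum>i<K. \<bar>a i * c i\<bar>)" by (rule sum_abs)
    also have "\<dots> \<le> (\<Sum>i<K. \<bar>a i\<bar> * (Cx + Cy))"
    proof (rule sum_mono)
      fix i
      have "\<bar>c i\<bar> \<le> (Cx + Cy) * W_norm x y m n c" by (rule c_bound[OF c(1)])
      also have "\<dots> \<le> Cx + Cy" using c(2) Cx0 Cy0 by (simp add: mult_left_le)
      finally show "\<bar>a i * c i\<bar> \<le> \<bar>a i\<bar> * (Cx + Cy)" by (simp add: abs_mult mult_left_mono)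
    qed
    also have "\<dots> = (\<Sum>i<K. \<bar>a i\<bar>) * (Cx + Cy)" by (simp add: sum_distrib_right)
    finally show ?thesis .
  qed
  then show ?thesis by (auto simp: bdd_above_def)
qed

lemma W1: "c00 c \<Longrightarrow> W_norm x y m n c \<le> 1 \<Longrightarrow> \<bar>\<Sum>i<K. a i * c i\<bar> \<le> W_dual_comb_norm x y m n K a"
  unfolding W_dual_comb_norm_def by (rule cSup_upper[OF _ S_bdd]) auto

lemma zero_c00: "c00 (\<lambda>_. 0)" by (simp add: c00_def)

lemma Wn_zero: "W_norm x y m n (\<lambda>_. 0) = 0" by (simp add: W_norm_def)

lemma W0: "0 \<le> W_dual_comb_norm x y m n K a"
  using W1[OF zero_c00, of a] Wn_zero by simp

lemma Wn_scale: "t \<noteq> 0 \<Longrightarrow> W_norm x y m n (\<lambda>i. t * d i) = \<bar>t\<bar> * W_norm x y m n d"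
proof -
  assume t: "t \<noteq> 0"
  have e1: "{i. t * d (m i) \<noteq> 0} = {i. d (m i) \<noteq> 0}" "{i. t * d (n i) \<noteq> 0} = {i. d (n i) \<noteq> 0}"
    using t by auto
  have mx: "max (\<bar>t\<bar> * a) (\<bar>t\<bar> * b) = \<bar>t\<bar> * max a b" for a b :: real
    by (simp add: max_def mult_le_cancel_left)
  have s1: "(\<Sum>i\<in>{i. d (m i) \<noteq> 0}. (t * d (m i)) *\<^sub>R x i) = t *\<^sub>R (\<Sum>i\<in>{i. d (m i) \<noteq> 0}. d (m i) *\<^sub>R x i)"
    by (simp add: scaleR_sum_right)
  have s2: "(\<Sum>i\<in>{i. d (n i) \<noteq> 0}. (t * d (n i)) *\<^sub>R y i) = t *\<^sub>R (\<Sum>i\<in>{i. d (n i) \<noteq> 0}. d (n i) *\<^sub>R y i)"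
    by (simp add: scaleR_sum_right)
  show ?thesis
    unfolding W_norm_def e1 s1 s2 norm_scaleR real_norm_def mx ..
qed

lemma c00_scale: "c00 d \<Longrightarrow> c00 (\<lambda>i. t * d i)"
  unfolding c00_def by (rule finite_subset[rotated]) auto

lemma W2: "c00 d \<Longrightarrow> \<bar>\<Sum>i<K. a i * d i\<bar> \<le> W_dual_comb_norm x y m n K a * W_norm x y m n d"
proof -
  assume d: "c00 d"
  let ?W = "W_dual_comb_norm x y m n K a"
  have sc: "(\<Sum>i<K. a i * (t * d i)) = t * (\<Sum>i<K. a i * d i)" for t
    by (simp add: sum_distrib_left algebra_simps)
  show ?thesis
  proof (cases "W_norm x y m n d = 0")
    case False
    then have pos: "W_norm x y m n d > 0" using Wn_nonneg[of d] by simp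
    define t where "t = 1 / W_norm x y m n d"
    have t: "t > 0" "t \<noteq> 0" using pos by (auto simp: t_def)
    have "W_norm x y m n (\<lambda>i. t * d i) = 1" using Wn_scale[OF t(2)] t pos by (simp add: t_def)
    then have "\<bar>\<Sum>i<K. a i * (t * d i)\<bar> \<le> ?W" using W1[OF c00_scale[OF d]] by simp
    then have "t * \<bar>\<Sum>i<K. a i * d i\<bar> \<le> ?W" using t by (simp add: sc abs_mult)
    then show ?thesis using pos by (simp add: t_def field_simps)
  next
    case True
    have "(\<Sum>i<K. a i * d i) = 0"
    proof (rule ccontr)
      assume ne: "(\<Sum>i<K. a i * d i) \<noteq> 0"
      define s where "s = \<bar>\<Sum>i<K. a i * d i\<bar>"
      have s: "s > 0" using ne by (simp add: s_def)
      define t where "t = (?W + 1) / s"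
      have t: "t > 0" using s W0[of a] by (simp add: t_def)
      have "W_norm x y m n (\<lambda>i. t * d i) \<le> 1" using Wn_scale[of t d] t True by simp
      then have "\<bar>\<Sum>i<K. a i * (t * d i)\<bar> \<le> ?W" using W1[OF c00_scale[OF d]] by simp
      then have "t * s \<le> ?W" using t by (simp add: sc abs_mult s_def)
      moreover have "t * s = ?W + 1" using s by (simp add: t_def)
      ultimately show False by simp
    qed
    then show ?thesis using True by simp
  qed
qed

lemma W3: "i < K \<Longrightarrow> \<bar>a i\<bar> \<le> W_dual_comb_norm x y m n K a"
proof -
  assume i: "i < K"
  define c where "c k = (if k = i then 1 else 0::real)" for k
  have c00: "c00 c" unfolding c00_def c_def by (rule finite_subset[of _ "{i}"]) auto
  have "W_norm x y m n c \<le> 1"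
    unfolding W_norm_def c_def using unit_sum[OF injm nzx, of i] unit_sum[OF injn nzy, of i] by simp
  then have "\<bar>\<Sum>k<K. a k * c k\<bar> \<le> W_dual_comb_norm x y m n K a" by (rule W1[OF c00])
  moreover have "(\<Sum>k<K. a k * c k) = a i"
  proof -
    have "(\<Sum>k<K. a k * c k) = (\<Sum>k<K. if k = i then a k else 0)" by (rule sum.cong) (auto simp: c_def)
    also have "\<dots> = a i" using i by simp
    finally show ?thesis .
  qed
  ultimately show ?thesis by simp
qed

lemma BLy: "bounded_linear (\<lambda>v. \<Sum>j<N. a j * coord y j v)"
proof (rule bounded_linear_intro[where K = "(\<Sum>j<N. \<bar>a j\<bar>) * Cy"])
  fix u v
  show "(\<Sum>j<N. a j * coord y j (u + v)) = (\<Sum>j<N. a j * coord y j u) + (\<Sum>j<N. a j * coord y j v)"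
    by (simp add: coord_add[OF sby] distrib_left sum.distrib)
next
  fix r v
  show "(\<Sum>j<N. a j * coord y j (r *\<^sub>R v)) = r *\<^sub>R (\<Sum>j<N. a j * coord y j v)"
    by (simp add: coord_scale[OF sby] sum_distrib_left algebra_simps)
next
  fix v
  have "norm (\<Sum>j<N. a j * coord y j v) \<le> (\<Sum>j<N. \<bar>a j * coord y j v\<bar>)"
    unfolding real_norm_def by (rule sum_abs)
  also have "\<dots> \<le> (\<Sum>j<N. \<bar>a j\<bar> * (Cy * norm v))"
    by (rule sum_mono) (simp add: abs_mult mult_left_mono cy)
  also have "\<dots> = (\<Sum>j<N. \<bar>a j\<bar>) * (Cy * norm v)" by (rule sum_distrib_right[symmetric])
  also have "\<dots> = norm v * ((\<Sum>j<N. \<bar>a j\<bar>) * Cy)" by (simp add: algebra_simps)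
  finally show "norm (\<Sum>j<N. a j * coord y j v) \<le> norm v * ((\<Sum>j<N. \<bar>a j\<bar>) * Cy)" .
qed

lemma decomp:
  "\<exists>\<phi> \<psi>. (\<forall>d. (\<forall>i\<ge>K. d i = 0) \<longrightarrow> (\<Sum>i<K. a i * d i) = (\<Sum>j<JM. \<phi> j * d (m j)) + (\<Sum>j<JN. \<psi> j * d (n j)))
     \<and> (\<forall>s. \<bar>\<Sum>j<JM. s j * \<phi> j\<bar> \<le> W_dual_comb_norm x y m n K a * norm (\<Sum>j<JM. s j *\<^sub>R x j))
     \<and> (\<forall>s. \<bar>\<Sum>j<JN. s j * \<psi> j\<bar> \<le> W_dual_comb_norm x y m n K a * norm (\<Sum>j<JN. s j *\<^sub>R y j))"
proof -
  define A where "A = W_dual_comb_norm x y m n K a"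
  have A0: "0 \<le> A" using W0 by (simp add: A_def)
  define l :: "(nat \<Rightarrow> real) \<Rightarrow> 'a \<times> 'b" where "l d = (\<Sum>j<JM. d (m j) *\<^sub>R x j, \<Sum>j<JN. d (n j) *\<^sub>R y j)" for d
  define L where "L = {l d | d. \<forall>i\<ge>K. d i = 0}"
  define p :: "'a \<times> 'b \<Rightarrow> real" where "p g = A * max (norm (fst g)) (norm (snd g))" for g
  define dd where "dd g i = (if i \<in> range m then coord x (inv m i) (fst g) else coord y (inv n i) (snd g))"
    for g :: "'a \<times> 'b" and i
  define f where "f g = (\<Sum>i<K. a i * dd g i)" for g
  have l_add: "l d1 + l d2 = l (\<lambda>i. d1 i + d2 i)" for d1 d2
    unfolding l_def by (simp add: sum.distrib scaleR_add_left)
  have l_scale: "t *\<^sub>R l d = l (\<lambda>i. t * d i)" for t d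
    unfolding l_def by (simp add: scaleR_sum_right)
  have l_0: "l (\<lambda>_. 0) = 0" unfolding l_def by (simp add: zero_prod_def)
  have dd_l: "dd (l d) i = d i" if "i < K" for d i
  proof (cases "i \<in> range m")
    case True
    then obtain j0 where j0: "i = m j0" by auto
    have "inv m i = j0" using j0 injm by (simp add: inv_f_f)
    moreover have "j0 < JM" using JM that j0 by simp
    ultimately show ?thesis using True j0 by (simp add: dd_def l_def coord_finite[OF sbx])
  next
    case False
    then have "i \<in> range n" using cov by auto
    then obtain j0 where j0: "i = n j0" by auto
    have "inv n i = j0" using j0 injn by (simp add: inv_f_f)
    moreover have "j0 < JN" using JN that j0 by simp
    ultimately show ?thesis using False j0 by (simp add: dd_def l_def coord_finite[OF sby])
  qed
  have f_l: "f (l d) = (\<Sum>i<K. a i * d i)" for d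
    unfolding f_def by (rule sum.cong) (simp_all add: dd_l)
  have subL: "subsp L"
    unfolding subsp_def
  proof (intro conjI ballI allI)
    show "0 \<in> L" unfolding L_def using l_0 by force
  next
    fix g h assume "g \<in> L" "h \<in> L"
    then obtain d1 d2 where "g = l d1" "h = l d2" "\<forall>i\<ge>K. d1 i = 0" "\<forall>i\<ge>K. d2 i = 0"
      unfolding L_def by blast
    then show "g + h \<in> L" unfolding L_def using l_add by force
  next
    fix g t assume "g \<in> L"
    then obtain d1 where "g = l d1" "\<forall>i\<ge>K. d1 i = 0" unfolding L_def by blast
    then show "t *\<^sub>R g \<in> L" unfolding L_def using l_scale by force
  qed
  have linf: "lin_on L f"
    unfolding lin_on_def
  proof (intro conjI ballI allI)
    fix g h assume "g \<in> L" "h \<in> L"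
    then obtain d1 d2 where "g = l d1" "h = l d2" unfolding L_def by blast
    then show "f (g + h) = f g + f h" by (simp add: l_add f_l distrib_left sum.distrib)
  next
    fix g t assume "g \<in> L"
    then obtain d1 where "g = l d1" unfolding L_def by blast
    then show "f (t *\<^sub>R g) = t * f g" by (simp add: l_scale f_l sum_distrib_left algebra_simps)
  qed
  have mx: "max (t * a) (t * b) = t * max a b" if "0 \<le> t" for a b t :: real
    using that by (simp add: max_mult_distrib_left)
  have sp: "sublin p"
    unfolding sublin_def
  proof (intro conjI allI impI)
    fix g h :: "'a \<times> 'b"
    have "max (norm (fst g + fst h)) (norm (snd g + snd h))
        \<le> max (norm (fst g)) (norm (snd g)) + max (norm (fst h)) (norm (snd h))"
      using norm_triangle_ineq[of "fst g" "fst h"] norm_triangle_ineq[of "snd g" "snd h"]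
        max.cobounded1[of "norm (fst g)" "norm (snd g)"] max.cobounded2[of "norm (fst g)" "norm (snd g)"]
        max.cobounded1[of "norm (fst h)" "norm (snd h)"] max.cobounded2[of "norm (fst h)" "norm (snd h)"]
      apply (simp only: max.bounded_iff)
      apply (intro conjI)
       apply linarith+
      done
    then show "p (g + h) \<le> p g + p h" unfolding p_def using A0
      by (simp add: distrib_left[symmetric] mult_left_mono)
  next
    fix g :: "'a \<times> 'b" and t :: real assume t: "0 \<le> t"
    show "p (t *\<^sub>R g) = t * p g" unfolding p_def using t mx[OF t] by simp
  qed
  have c00L: "c00 d" if dK: "\<forall>i\<ge>K. d i = 0" for d
  proof -
    have "{i. d i \<noteq> 0} \<subseteq> {..<K}"
    proof
      fix i assume "i \<in> {i. d i \<noteq> 0}"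
      then show "i \<in> {..<K}" using dK by (meson lessThan_iff not_le mem_Collect_eq)
    qed
    then show ?thesis unfolding c00_def by (rule finite_subset) simp
  qed
  have WnL: "W_norm x y m n d = max (norm (fst (l d))) (norm (snd (l d)))" if d: "\<forall>i\<ge>K. d i = 0" for d
  proof -
    have "(\<Sum>i\<in>{i. d (m i) \<noteq> 0}. d (m i) *\<^sub>R x i) = (\<Sum>j<JM. d (m j) *\<^sub>R x j)"
    proof (rule sum.mono_neutral_left)
      show "{i. d (m i) \<noteq> 0} \<subseteq> {..<JM}" using d JM by (auto simp: not_less[symmetric])
    qed auto
    moreover have "(\<Sum>i\<in>{i. d (n i) \<noteq> 0}. d (n i) *\<^sub>R y i) = (\<Sum>j<JN. d (n j) *\<^sub>R y j)"
    proof (rule sum.mono_neutral_left)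
      show "{i. d (n i) \<noteq> 0} \<subseteq> {..<JN}" using d JN by (auto simp: not_less[symmetric])
    qed auto
    ultimately show ?thesis unfolding W_norm_def l_def by simp
  qed
  have fp: "\<forall>g\<in>L. f g \<le> p g"
  proof
    fix g assume "g \<in> L"
    then obtain d where d: "g = l d" "\<forall>i\<ge>K. d i = 0" unfolding L_def by blast
    have "f g = (\<Sum>i<K. a i * d i)" using d f_l by simp
    also have "\<dots> \<le> \<bar>\<Sum>i<K. a i * d i\<bar>" by simp
    also have "\<dots> \<le> A * W_norm x y m n d" unfolding A_def by (rule W2[OF c00L[OF d(2)]])
    also have "\<dots> = p g" using WnL[OF d(2)] d(1) by (simp add: p_def)
    finally show "f g \<le> p g" .
  qed
  define ws where "ws = map (\<lambda>j. (x j, 0::'b)) [0..<JM] @ map (\<lambda>j. (0::'a, y j)) [0..<JN]"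
  obtain F where F: "lin_on (extn L ws) F" "\<forall>l\<in>L. F l = f l" "\<forall>g\<in>extn L ws. F g \<le> p g"
    using HBn[OF subL sp linf fp] by blast
  define E where "E = extn L ws"
  have E: "subsp E" "L \<subseteq> E" "set ws \<subseteq> E" using extn_props[OF subL, of ws] by (auto simp: E_def)
  have FE: "lin_on E F" "\<forall>g\<in>E. F g \<le> p g" using F by (auto simp: E_def)
  have Fabs: "\<bar>F g\<bar> \<le> p g" if g: "g \<in> E" for g
  proof -
    have "(-1) *\<^sub>R g \<in> E" using E(1) g unfolding subsp_def by blast
    then have "F ((-1) *\<^sub>R g) \<le> p ((-1) *\<^sub>R g)" using FE(2) by blast
    moreover have "F ((-1) *\<^sub>R g) = (-1) * F g" using FE(1) g unfolding lin_on_def by blast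
    moreover have "p ((-1) *\<^sub>R g) = p g" unfolding p_def by simp
    moreover have "F g \<le> p g" using FE(2) g by blast
    ultimately show ?thesis by simp
  qed
  define \<phi> where "\<phi> j = F (x j, 0)" for j
  define \<psi> where "\<psi> j = F (0, y j)" for j
  have xin: "\<forall>j\<in>{..<JM}. (x j, 0::'b) \<in> E" using E(3) by (auto simp: ws_def)
  have yin: "\<forall>j\<in>{..<JN}. (0::'a, y j) \<in> E" using E(3) by (auto simp: ws_def)
  have sumX: "(\<Sum>j<JM. s j *\<^sub>R (x j, 0::'b)) \<in> E \<and> F (\<Sum>j<JM. s j *\<^sub>R (x j, 0::'b)) = (\<Sum>j<JM. s j * \<phi> j)" for s
    using lin_on_sum[OF E(1) FE(1) finite_lessThan xin, of s] by (simp add: \<phi>_def)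
  have sumY: "(\<Sum>j<JN. s j *\<^sub>R (0::'a, y j)) \<in> E \<and> F (\<Sum>j<JN. s j *\<^sub>R (0::'a, y j)) = (\<Sum>j<JN. s j * \<psi> j)" for s
    using lin_on_sum[OF E(1) FE(1) finite_lessThan yin, of s] by (simp add: \<psi>_def)
  have pairX: "(\<Sum>j<JM. s j *\<^sub>R (x j, 0::'b)) = (\<Sum>j<JM. s j *\<^sub>R x j, 0)" for s
    by (simp add: sum_prod)
  have pairY: "(\<Sum>j<JN. s j *\<^sub>R (0::'a, y j)) = (0, \<Sum>j<JN. s j *\<^sub>R y j)" for s
    by (simp add: sum_prod)
  have bX: "\<bar>\<Sum>j<JM. s j * \<phi> j\<bar> \<le> A * norm (\<Sum>j<JM. s j *\<^sub>R x j)" for s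
    using Fabs[OF conjunct1[OF sumX[of s]]] sumX[of s] unfolding pairX by (simp add: p_def)
  have bY: "\<bar>\<Sum>j<JN. s j * \<psi> j\<bar> \<le> A * norm (\<Sum>j<JN. s j *\<^sub>R y j)" for s
    using Fabs[OF conjunct1[OF sumY[of s]]] sumY[of s] unfolding pairY by (simp add: p_def)
  have ident: "(\<Sum>i<K. a i * d i) = (\<Sum>j<JM. \<phi> j * d (m j)) + (\<Sum>j<JN. \<psi> j * d (n j))"
    if d: "\<forall>i\<ge>K. d i = 0" for d
  proof -
    let ?u = "\<Sum>j<JM. d (m j) *\<^sub>R (x j, 0::'b)"
    let ?w = "\<Sum>j<JN. d (n j) *\<^sub>R (0::'a, y j)"
    have "l d = ?u + ?w" unfolding l_def pairX pairY by simp
    moreover have "l d \<in> L" unfolding L_def using d by blast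
    ultimately have "F (?u + ?w) = (\<Sum>i<K. a i * d i)" using F(2) f_l by metis
    moreover have "F (?u + ?w) = F ?u + F ?w"
      using FE(1) sumX[of "\<lambda>j. d (m j)"] sumY[of "\<lambda>j. d (n j)"] unfolding lin_on_def by blast
    ultimately show ?thesis using sumX[of "\<lambda>j. d (m j)"] sumY[of "\<lambda>j. d (n j)"]
      by (simp add: mult.commute)
  qed
  show ?thesis using ident bX bY unfolding A_def by blast
qed

lemma pointwise:
  fixes a \<phi> \<psi> :: "nat \<Rightarrow> real"
  assumes ident: "\<forall>d. (\<forall>i\<ge>K. d i = 0) \<longrightarrow> (\<Sum>i<K. a i * d i) = (\<Sum>j<JM. \<phi> j * d (m j)) + (\<Sum>j<JN. \<psi> j * d (n j))"
    and i: "i < K"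
  shows "a i = (if i \<in> range m then \<phi> (inv m i) else 0) + (if i \<in> range n then \<psi> (inv n i) else 0)"
proof -
  define d where "d k = (if k = i then 1 else 0::real)" for k
  have d0: "\<forall>k\<ge>K. d k = 0" using i by (simp add: d_def)
  have e1: "(\<Sum>k<K. a k * d k) = a i"
  proof -
    have "(\<Sum>k<K. a k * d k) = (\<Sum>k<K. if k = i then a k else 0)" by (rule sum.cong) (auto simp: d_def)
    also have "\<dots> = a i" using i by simp
    finally show ?thesis .
  qed
  have e2: "(\<Sum>j<JM. \<phi> j * d (m j)) = (if i \<in> range m then \<phi> (inv m i) else 0)"
  proof -
    have "(\<Sum>j<JM. \<phi> j * d (m j)) = (\<Sum>j<JM. (\<lambda>k. \<phi> (inv m k) * d k) (m j))"
      using injm by (simp add: inv_f_f)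
    also have "\<dots> = (\<Sum>k<K. if k \<in> range m then \<phi> (inv m k) * d k else 0)"
      by (rule reidx[OF sm JM])
    also have "\<dots> = (\<Sum>k<K. if k = i then (if i \<in> range m then \<phi> (inv m i) else 0) else 0)"
      by (rule sum.cong) (auto simp: d_def)
    also have "\<dots> = (if i \<in> range m then \<phi> (inv m i) else 0)" using i by simp
    finally show ?thesis .
  qed
  have e3: "(\<Sum>j<JN. \<psi> j * d (n j)) = (if i \<in> range n then \<psi> (inv n i) else 0)"
  proof -
    have "(\<Sum>j<JN. \<psi> j * d (n j)) = (\<Sum>j<JN. (\<lambda>k. \<psi> (inv n k) * d k) (n j))"
      using injn by (simp add: inv_f_f)
    also have "\<dots> = (\<Sum>k<K. if k \<in> range n then \<psi> (inv n k) * d k else 0)"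
      by (rule reidx[OF sn JN])
    also have "\<dots> = (\<Sum>k<K. if k = i then (if i \<in> range n then \<psi> (inv n i) else 0) else 0)"
      by (rule sum.cong) (auto simp: d_def)
    also have "\<dots> = (if i \<in> range n then \<psi> (inv n i) else 0)" using i by simp
    finally show ?thesis .
  qed
  have "a i = (\<Sum>j<JM. \<phi> j * d (m j)) + (\<Sum>j<JN. \<psi> j * d (n j))"
    using mp[OF spec[OF ident, of d] d0] e1 by simp
  then show ?thesis unfolding e2 e3 .
qed

lemma main_bound:
  fixes a b :: "nat \<Rightarrow> real"
  assumes Cs0: "0 \<le> Cs"
    and smy: "\<And>a b. dual_comb_norm y JN (\<lambda>i. a i * b i) \<le> Cs * dual_comb_norm y JN a * dual_comb_norm y JN b"
  shows "W_dual_comb_norm x y m n K (\<lambda>i. a i * b i)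
     \<le> (6 * Cx + Cs * Cy * Cy) * W_dual_comb_norm x y m n K a * W_dual_comb_norm x y m n K b"
proof -
  define A where "A = W_dual_comb_norm x y m n K a"
  define B where "B = W_dual_comb_norm x y m n K b"
  have A0: "0 \<le> A" and B0: "0 \<le> B" using W0 by (auto simp: A_def B_def)
  obtain \<phi>1 \<psi>1 where
    id1: "\<forall>d. (\<forall>i\<ge>K. d i = 0) \<longrightarrow> (\<Sum>i<K. a i * d i) = (\<Sum>j<JM. \<phi>1 j * d (m j)) + (\<Sum>j<JN. \<psi>1 j * d (n j))"
    and bX1: "\<forall>s. \<bar>\<Sum>j<JM. s j * \<phi>1 j\<bar> \<le> A * norm (\<Sum>j<JM. s j *\<^sub>R x j)"
    and bY1: "\<forall>s. \<bar>\<Sum>j<JN. s j * \<psi>1 j\<bar> \<le> A * norm (\<Sum>j<JN. s j *\<^sub>R y j)"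
    using decomp[of a] unfolding A_def by blast
  obtain \<phi>2 \<psi>2 where
    id2: "\<forall>d. (\<forall>i\<ge>K. d i = 0) \<longrightarrow> (\<Sum>i<K. b i * d i) = (\<Sum>j<JM. \<phi>2 j * d (m j)) + (\<Sum>j<JN. \<psi>2 j * d (n j))"
    and bX2: "\<forall>s. \<bar>\<Sum>j<JM. s j * \<phi>2 j\<bar> \<le> B * norm (\<Sum>j<JM. s j *\<^sub>R x j)"
    and bY2: "\<forall>s. \<bar>\<Sum>j<JN. s j * \<psi>2 j\<bar> \<le> B * norm (\<Sum>j<JN. s j *\<^sub>R y j)"
    using decomp[of b] unfolding B_def by blast
  define \<alpha>1 where "\<alpha>1 i = (if i \<in> range m then \<phi>1 (inv m i) else 0)" for i
  define \<beta>1 where "\<beta>1 i = (if i \<in> range n then \<psi>1 (inv n i) else 0)" for i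
  define \<alpha>2 where "\<alpha>2 i = (if i \<in> range m then \<phi>2 (inv m i) else 0)" for i
  define \<beta>2 where "\<beta>2 i = (if i \<in> range n then \<psi>2 (inv n i) else 0)" for i
  have pa: "a i = \<alpha>1 i + \<beta>1 i" if "i < K" for i
    using pointwise[OF id1 that] by (simp add: \<alpha>1_def \<beta>1_def)
  have pb: "b i = \<alpha>2 i + \<beta>2 i" if "i < K" for i
    using pointwise[OF id2 that] by (simp add: \<alpha>2_def \<beta>2_def)
  have aK: "\<bar>a i\<bar> \<le> A" if "i < K" for i using W3[OF that] by (simp add: A_def)
  have bK: "\<bar>b i\<bar> \<le> B" if "i < K" for i using W3[OF that] by (simp add: B_def)
  have \<phi>2b: "\<bar>\<phi>2 j\<bar> \<le> B" if j: "j < JM" for j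
  proof -
    define s where "s k = (if k = j then 1 else 0::real)" for k
    have e1: "(\<Sum>k<JM. s k * \<phi>2 k) = \<phi>2 j"
    proof -
      have "(\<Sum>k<JM. s k * \<phi>2 k) = (\<Sum>k<JM. if k = j then \<phi>2 k else 0)" by (rule sum.cong) (auto simp: s_def)
      then show ?thesis using j by simp
    qed
    have e2: "(\<Sum>k<JM. s k *\<^sub>R x k) = x j"
    proof -
      have "(\<Sum>k<JM. s k *\<^sub>R x k) = (\<Sum>k<JM. if k = j then x k else 0)" by (rule sum.cong) (auto simp: s_def)
      then show ?thesis using j by simp
    qed
    show ?thesis using bX2[rule_format, of s] unfolding e1 e2 nzx by simp
  qed
  show ?thesis
    unfolding A_def[symmetric] B_def[symmetric] W_dual_comb_norm_def[of x y m n K "\<lambda>i. a i * b i"]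
  proof (rule cSup_least)
    show "{\<bar>\<Sum>i<K. a i * b i * c i\<bar> | c. c00 c \<and> W_norm x y m n c \<le> 1} \<noteq> {}"
      using zero_c00 Wn_zero by force
    fix z assume "z \<in> {\<bar>\<Sum>i<K. a i * b i * c i\<bar> | c. c00 c \<and> W_norm x y m n c \<le> 1}"
    then obtain c where z: "z = \<bar>\<Sum>i<K. a i * b i * c i\<bar>" and c: "c00 c" "W_norm x y m n c \<le> 1" by blast
    define v where "v = (\<Sum>i\<in>{i. c (m i) \<noteq> 0}. c (m i) *\<^sub>R x i)"
    define w where "w = (\<Sum>i\<in>{i. c (n i) \<noteq> 0}. c (n i) *\<^sub>R y i)"
    have nv: "norm v \<le> 1" using VX_le[of c] c(2) by (simp add: v_def)
    have nw: "norm w \<le> 1" using VY_le[of c] c(2) by (simp add: w_def)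
    have cv: "coord x j v = c (m j)" for j using coordVX[OF c(1)] by (simp add: v_def)
    have cw: "coord y j w = c (n j)" for j using coordVY[OF c(1)] by (simp add: w_def)
    have proj: "norm (\<Sum>j\<in>G'. c (m j) *\<^sub>R x j) \<le> Cx" if G': "G' \<subseteq> {..<JM}" for G'
    proof -
      have fG: "finite G'" using G' finite_subset by blast
      have "(\<Sum>j\<in>G'. c (m j) *\<^sub>R x j) = PP x G' v" by (simp add: PP_def cv)
      also have "norm \<dots> \<le> Cx * norm v" by (rule PPx[OF fG])
      also have "\<dots> \<le> Cx" using nv Cx0 by (simp add: mult_left_le)
      finally show ?thesis .
    qed
    have mb: "norm (\<Sum>j<JM. \<beta> j *\<^sub>R (c (m j) *\<^sub>R x j)) \<le> 2 * Bb * Cx"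
      if "\<And>j. j < JM \<Longrightarrow> \<bar>\<beta> j\<bar> \<le> Bb" "0 \<le> Bb" for \<beta> Bb
      using mult_bound[of "{..<JM}" "\<lambda>j. c (m j) *\<^sub>R x j" Cx \<beta> Bb] proj that by auto
    have X1: "\<bar>\<Sum>j<JM. \<phi>1 j * (b (m j) * c (m j))\<bar> \<le> A * (2 * B * Cx)"
    proof -
      have "\<bar>\<Sum>j<JM. \<phi>1 j * (b (m j) * c (m j))\<bar> = \<bar>\<Sum>j<JM. (b (m j) * c (m j)) * \<phi>1 j\<bar>"
        by (simp add: mult.commute)
      also have "\<dots> \<le> A * norm (\<Sum>j<JM. (b (m j) * c (m j)) *\<^sub>R x j)" by (rule bX1[rule_format])
      also have "(\<Sum>j<JM. (b (m j) * c (m j)) *\<^sub>R x j) = (\<Sum>j<JM. b (m j) *\<^sub>R (c (m j) *\<^sub>R x j))" by simp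
      also have "A * norm \<dots> \<le> A * (2 * B * Cx)"
        using mb[of "\<lambda>j. b (m j)" B] bK JM B0 A0 by (intro mult_left_mono) auto
      finally show ?thesis .
    qed
    have X2: "\<bar>\<Sum>j<JM. \<phi>2 j * (a (m j) * c (m j))\<bar> \<le> B * (2 * A * Cx)"
    proof -
      have "\<bar>\<Sum>j<JM. \<phi>2 j * (a (m j) * c (m j))\<bar> = \<bar>\<Sum>j<JM. (a (m j) * c (m j)) * \<phi>2 j\<bar>"
        by (simp add: mult.commute)
      also have "\<dots> \<le> B * norm (\<Sum>j<JM. (a (m j) * c (m j)) *\<^sub>R x j)" by (rule bX2[rule_format])
      also have "(\<Sum>j<JM. (a (m j) * c (m j)) *\<^sub>R x j) = (\<Sum>j<JM. a (m j) *\<^sub>R (c (m j) *\<^sub>R x j))" by simp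
      also have "B * norm \<dots> \<le> B * (2 * A * Cx)"
        using mb[of "\<lambda>j. a (m j)" A] aK JM B0 A0 by (intro mult_left_mono) auto
      finally show ?thesis .
    qed
    have X3: "\<bar>\<Sum>j<JM. \<phi>1 j * (\<phi>2 j * c (m j))\<bar> \<le> A * (2 * B * Cx)"
    proof -
      have "\<bar>\<Sum>j<JM. \<phi>1 j * (\<phi>2 j * c (m j))\<bar> = \<bar>\<Sum>j<JM. (\<phi>2 j * c (m j)) * \<phi>1 j\<bar>"
        by (simp add: mult.commute)
      also have "\<dots> \<le> A * norm (\<Sum>j<JM. (\<phi>2 j * c (m j)) *\<^sub>R x j)" by (rule bX1[rule_format])
      also have "(\<Sum>j<JM. (\<phi>2 j * c (m j)) *\<^sub>R x j) = (\<Sum>j<JM. \<phi>2 j *\<^sub>R (c (m j) *\<^sub>R x j))" by simp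
      also have "A * norm \<dots> \<le> A * (2 * B * Cx)"
        using mb[of \<phi>2 B] \<phi>2b B0 A0 by (intro mult_left_mono) auto
      finally show ?thesis .
    qed
    have dn1: "dual_comb_norm y JN \<psi>1 \<le> A * Cy"
      unfolding dual_comb_norm_def
    proof (rule onorm_bound)
      show "0 \<le> A * Cy" using A0 Cy0 by simp
      fix u
      have "norm (\<Sum>j<JN. \<psi>1 j * coord y j u) = \<bar>\<Sum>j<JN. coord y j u * \<psi>1 j\<bar>" by (simp add: mult.commute)
      also have "\<dots> \<le> A * norm (\<Sum>j<JN. coord y j u *\<^sub>R y j)" by (rule bY1[rule_format])
      also have "(\<Sum>j<JN. coord y j u *\<^sub>R y j) = PP y {..<JN} u" by (simp add: PP_def)
      also have "A * norm \<dots> \<le> A * (Cy * norm u)" using PPy A0 by (intro mult_left_mono) auto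
      finally show "norm (\<Sum>j<JN. \<psi>1 j * coord y j u) \<le> A * Cy * norm u" by (simp add: mult.assoc)
    qed
    have dn2: "dual_comb_norm y JN \<psi>2 \<le> B * Cy"
      unfolding dual_comb_norm_def
    proof (rule onorm_bound)
      show "0 \<le> B * Cy" using B0 Cy0 by simp
      fix u
      have "norm (\<Sum>j<JN. \<psi>2 j * coord y j u) = \<bar>\<Sum>j<JN. coord y j u * \<psi>2 j\<bar>" by (simp add: mult.commute)
      also have "\<dots> \<le> B * norm (\<Sum>j<JN. coord y j u *\<^sub>R y j)" by (rule bY2[rule_format])
      also have "(\<Sum>j<JN. coord y j u *\<^sub>R y j) = PP y {..<JN} u" by (simp add: PP_def)
      also have "B * norm \<dots> \<le> B * (Cy * norm u)" using PPy B0 by (intro mult_left_mono) auto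
      finally show "norm (\<Sum>j<JN. \<psi>2 j * coord y j u) \<le> B * Cy * norm u" by (simp add: mult.assoc)
    qed
    have p1: "0 \<le> dual_comb_norm y JN \<psi>1" unfolding dual_comb_norm_def by (rule onorm_pos_le[OF BLy])
    have p2: "0 \<le> dual_comb_norm y JN \<psi>2" unfolding dual_comb_norm_def by (rule onorm_pos_le[OF BLy])
    have Y: "\<bar>\<Sum>j<JN. (\<psi>1 j * \<psi>2 j) * c (n j)\<bar> \<le> Cs * (A * Cy) * (B * Cy)"
    proof -
      define \<Omega> where "\<Omega> = (\<lambda>u. \<Sum>j<JN. (\<psi>1 j * \<psi>2 j) * coord y j u)"
      have bl: "bounded_linear \<Omega>" unfolding \<Omega>_def by (rule BLy)
      have "(\<Sum>j<JN. (\<psi>1 j * \<psi>2 j) * c (n j)) = \<Omega> w" by (simp add: \<Omega>_def cw)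
      then have "\<bar>\<Sum>j<JN. (\<psi>1 j * \<psi>2 j) * c (n j)\<bar> = norm (\<Omega> w)" by simp
      also have "\<dots> \<le> onorm \<Omega> * norm w" by (rule onorm[OF bl])
      also have "\<dots> \<le> onorm \<Omega>" using nw onorm_pos_le[OF bl] by (simp add: mult_left_le)
      also have "onorm \<Omega> = dual_comb_norm y JN (\<lambda>j. \<psi>1 j * \<psi>2 j)" by (simp add: dual_comb_norm_def \<Omega>_def)
      also have "\<dots> \<le> Cs * dual_comb_norm y JN \<psi>1 * dual_comb_norm y JN \<psi>2" by (rule smy)
      also have "\<dots> \<le> Cs * (A * Cy) * (B * Cy)"
      proof (rule mult_mono)
        show "Cs * dual_comb_norm y JN \<psi>1 \<le> Cs * (A * Cy)" using dn1 Cs0 by (rule mult_left_mono)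
        show "dual_comb_norm y JN \<psi>2 \<le> B * Cy" by (rule dn2)
        show "0 \<le> Cs * (A * Cy)" using Cs0 A0 Cy0 by simp
        show "0 \<le> dual_comb_norm y JN \<psi>2" by (rule p2)
      qed
      finally show ?thesis .
    qed
    have split: "(\<Sum>i<K. a i * b i * c i) = (\<Sum>j<JM. \<phi>1 j * (b (m j) * c (m j))) + (\<Sum>j<JM. \<phi>2 j * (a (m j) * c (m j)))
        - (\<Sum>j<JM. \<phi>1 j * (\<phi>2 j * c (m j))) + (\<Sum>j<JN. (\<psi>1 j * \<psi>2 j) * c (n j))"
    proof -
      define gM where "gM i = \<phi>1 (inv m i) * (b i * c i) + \<phi>2 (inv m i) * (a i * c i) - \<phi>1 (inv m i) * (\<phi>2 (inv m i) * c i)" for i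
      define gN where "gN i = (\<psi>1 (inv n i) * \<psi>2 (inv n i)) * c i" for i
      have pt: "a i * b i * c i = (if i \<in> range m then gM i else 0) + (if i \<in> range n then gN i else 0)"
        if i: "i < K" for i
      proof -
        have "a i * b i * c i = (\<alpha>1 i * b i + a i * \<alpha>2 i - \<alpha>1 i * \<alpha>2 i + \<beta>1 i * \<beta>2 i) * c i"
          unfolding pa[OF i] pb[OF i] by (simp add: algebra_simps)
        also have "\<dots> = (if i \<in> range m then gM i else 0) + (if i \<in> range n then gN i else 0)"
          unfolding \<alpha>1_def \<alpha>2_def \<beta>1_def \<beta>2_def gM_def gN_def by (simp add: algebra_simps)
        finally show ?thesis .
      qed
      have "(\<Sum>i<K. a i * b i * c i) = (\<Sum>i<K. (if i \<in> range m then gM i else 0) + (if i \<in> range n then gN i else 0))"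
        by (rule sum.cong) (simp_all add: pt)
      also have "\<dots> = (\<Sum>i<K. (if i \<in> range m then gM i else 0)) + (\<Sum>i<K. (if i \<in> range n then gN i else 0))"
        by (rule sum.distrib)
      also have "(\<Sum>i<K. (if i \<in> range m then gM i else 0)) = (\<Sum>j<JM. gM (m j))" by (rule reidx[OF sm JM, symmetric])
      also have "(\<Sum>i<K. (if i \<in> range n then gN i else 0)) = (\<Sum>j<JN. gN (n j))" by (rule reidx[OF sn JN, symmetric])
      also have "(\<Sum>j<JM. gM (m j)) = (\<Sum>j<JM. \<phi>1 j * (b (m j) * c (m j))) + (\<Sum>j<JM. \<phi>2 j * (a (m j) * c (m j)))
        - (\<Sum>j<JM. \<phi>1 j * (\<phi>2 j * c (m j)))"
        by (simp add: gM_def injm inv_f_f sum.distrib sum_subtractf)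
      also have "(\<Sum>j<JN. gN (n j)) = (\<Sum>j<JN. (\<psi>1 j * \<psi>2 j) * c (n j))" by (simp add: gN_def injn inv_f_f)
      finally show ?thesis .
    qed
    have tri: "\<bar>p + q - r + s\<bar> \<le> \<bar>p\<bar> + \<bar>q\<bar> + \<bar>r\<bar> + \<bar>s\<bar>" for p q r s :: real by arith
    have "z \<le> A * (2 * B * Cx) + B * (2 * A * Cx) + A * (2 * B * Cx) + Cs * (A * Cy) * (B * Cy)"
      unfolding z split using tri X1 X2 X3 Y by (smt (verit))
    also have "\<dots> = (6 * Cx + Cs * Cy * Cy) * A * B" by (simp add: algebra_simps)
    finally show "z \<le> (6 * Cx + Cs * Cy * Cy) * A * B" .
  qed
qed

end

theorem lemma1p8:
  fixes x :: "nat \<Rightarrow> 'a::banach" and y :: "nat \<Rightarrow> 'b::banach" and m n :: "nat \<Rightarrow> nat"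
  assumes "normalized_schauder_basis x" and "unconditional_basis x"
    and "normalized_schauder_basis y"
    and "submultiplicative (dual_comb_norm y)"
    and "strict_mono m" and "strict_mono n" and "range m \<union> range n = UNIV"
  shows "submultiplicative (W_dual_comb_norm x y m n)"
proof -
  have sbx: "schauder_basis x" and nzx: "\<And>i. norm (x i) = 1"
    using assms(1) unfolding normalized_schauder_basis_def by auto
  have sby: "schauder_basis y" and nzy: "\<And>i. norm (y i) = 1"
    using assms(3) unfolding normalized_schauder_basis_def by auto
  obtain Cx where Cx: "Cx > 0" "\<forall>v G. finite G \<longrightarrow> norm (PP x G v) \<le> Cx * norm v"
      "\<forall>v i. \<bar>coord x i v\<bar> \<le> Cx * norm v"
    using x_const[OF sbx nzx assms(2)] by blast
  obtain Cy where Cy: "Cy > 0" "\<forall>v N. norm (PP y {..<N} v) \<le> Cy * norm v"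
      "\<forall>v i. \<bar>coord y i v\<bar> \<le> Cy * norm v"
    using y_const[OF sby nzy] by blast
  obtain Cs where Cs: "Cs > 0"
      "\<forall>K a b. dual_comb_norm y K (\<lambda>i. a i * b i) \<le> Cs * dual_comb_norm y K a * dual_comb_norm y K b"
    using assms(4) unfolding submultiplicative_def by blast
  show ?thesis
    unfolding submultiplicative_def
  proof (intro exI[of _ "6 * Cx + Cs * Cy * Cy"] conjI allI)
    show "0 < 6 * Cx + Cs * Cy * Cy" using Cx(1) Cy(1) Cs(1) by (simp add: add_pos_nonneg)
    fix K a b
    obtain JM where JM: "\<forall>j. j < JM \<longleftrightarrow> m j < K" using strict_mono_cut[OF assms(5)] by blast
    obtain JN where JN: "\<forall>j. j < JN \<longleftrightarrow> n j < K" using strict_mono_cut[OF assms(6)] by blast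
    show "W_dual_comb_norm x y m n K (\<lambda>i. a i * b i)
        \<le> (6 * Cx + Cs * Cy * Cy) * W_dual_comb_norm x y m n K a * W_dual_comb_norm x y m n K b"
    proof (rule main_bound[OF sbx nzx sby nzy])
      show "\<And>v G. finite G \<Longrightarrow> norm (PP x G v) \<le> Cx * norm v" using Cx(2) by blast
      show "\<And>v i. \<bar>coord x i v\<bar> \<le> Cx * norm v" using Cx(3) by blast
      show "\<And>v N. norm (PP y {..<N} v) \<le> Cy * norm v" using Cy(2) by blast
      show "\<And>v i. \<bar>coord y i v\<bar> \<le> Cy * norm v" using Cy(3) by blast
      show "Cx > 0" "Cy > 0" by (fact Cx(1), fact Cy(1))
      show "strict_mono m" "strict_mono n" "range m \<union> range n = UNIV" by (fact assms(5), fact assms(6), fact assms(7))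
      show "\<And>j. j < JM \<longleftrightarrow> m j < K" using JM by blast
      show "\<And>j. j < JN \<longleftrightarrow> n j < K" using JN by blast
      show "0 \<le> Cs" using Cs(1) by simp
      show "\<And>a b. dual_comb_norm y JN (\<lambda>i. a i * b i) \<le> Cs * dual_comb_norm y JN a * dual_comb_norm y JN b"
        using Cs(2) by blast
    qed
  qed
qed

end
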